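(* Let $p>1$. If either $N\ge2$ and $M\le-\mu^*(1)$, or $N=1$ and $M<-\mu^*(1)$, then (E) has a ground state $u$, and it satisfies $u_r(r)^2<\frac{2p}{p+1}u(r)^{p+1}$ for all $r>0$. As a consequence, the corresponding trajectory $t\mapsto(x(t),y(t))$ does not converge to $(0,0)$ as $t\to\infty$. If moreover either $N\ge3$ and $1<p<\frac{N}{N-2}$, or $N\in\{1,2\}$, then this trajectory does not converge to $P_{1,M}$ as $t\to\infty$.
   Context: (E) denotes the ODE $-u_{rr}-\frac{N-1}{r}u_r=|u|^{p-1}u+M|u_r|^{\frac{2p}{p+1}}$ for $r>0$. A ground state is a nonnegative $u\in C^2([0,\infty))$ with $u_r(0)=0$ solving (E) on $(0,\infty)$. $\mu^*(1)=(p+1)\left(\frac{p+1}{2p}\right)^{\frac{p}{p+1}}$. Trajectory: $t=\ln r$, $x(t)=r^{\frac{2}{p-1}}u(r)$, $y(t)=-r^{\frac{p+1}{p-1}}u_r(r)$. With $K=\frac{(N-2)p-N}{p-1}$, in the last case the equation $X^{p-1}+M\left(\frac{2}{p-1}\right)^{\frac{2p}{p+1}}X^{\frac{p-1}{p+1}}-\frac{2K}{p-1}=0$ has two positive roots $X_{1,M}<X_{2,M}$, and $P_{1,M}=(X_{1,M},\frac{2}{p-1}X_{1,M})$. *)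

theory Defs
  imports "HOL-Analysis.Analysis"
begin

definition mu_star1 :: "real \<Rightarrow> real" where
  "mu_star1 p = (p + 1) * ((p + 1) / (2 * p)) powr (p / (p + 1))"

definition ground_state :: "nat \<Rightarrow> real \<Rightarrow> real \<Rightarrow> (real \<Rightarrow> real) \<Rightarrow> bool" where
  "ground_state N p M u \<longleftrightarrow>
     (\<forall>r\<ge>0. 0 \<le> u r) \<and>
     (\<exists>u1 u2.
        (\<forall>r\<ge>0. (u has_real_derivative u1 r) (at r within {0..}) \<and>
                 (u1 has_real_derivative u2 r) (at r within {0..})) \<and>
        continuous_on {0..} u2 \<and>
        u1 0 = 0 \<and>
        (\<forall>r>0. - u2 r - (real N - 1) / r * u1 r
                 = \<bar>u r\<bar> powr (p - 1) * u r + M * \<bar>u1 r\<bar> powr (2 * p / (p + 1))))"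

definition Kc :: "nat \<Rightarrow> real \<Rightarrow> real" where
  "Kc N p = ((real N - 2) * p - real N) / (p - 1)"

text \<open>The function whose positive zeros are X_{1,M} < X_{2,M}.\<close>
definition PhiM :: "nat \<Rightarrow> real \<Rightarrow> real \<Rightarrow> real \<Rightarrow> real" where
  "PhiM N p M X = X powr (p - 1) + M * (2 / (p - 1)) powr (2 * p / (p + 1)) * X powr ((p - 1) / (p + 1))
                  - 2 * Kc N p / (p - 1)"

definition traj :: "real \<Rightarrow> (real \<Rightarrow> real) \<Rightarrow> real \<Rightarrow> real \<times> real" where
  "traj p u t = (exp t powr (2 / (p - 1)) * u (exp t),
                 - (exp t powr ((p + 1) / (p - 1)) * deriv u (exp t)))"

end

theory Submission
  imports Defs
begin

lemma at_Ici_local: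
  fixes x b :: real
  assumes "0 \<le> x" "x < b"
  shows "at x within {0..b} = at x within {0..}"
  by (rule at_within_nhd[of x "{..<b}"]) (use assms in auto)

lemma cont_Ici_from_Icc:
  fixes f :: "real \<Rightarrow> real"
  assumes "\<And>T. T > 0 \<Longrightarrow> continuous_on {0..T} f"
  shows "continuous_on {0..} f"
  unfolding continuous_on_eq_continuous_within
proof
  fix x :: real assume x: "x \<in> {0..}"
  have "continuous_on {0..x+1} f" using assms x by auto
  then have "continuous (at x within {0..x+1}) f"
    using x by (simp add: continuous_on_eq_continuous_within)
  then show "continuous (at x within {0..}) f"
    using at_Ici_local[of x "x+1"] x by simp
qed

lemma integral_pow0:
  fixes r :: real assumes "0 \<le> r"
  shows "((\<lambda>s. s ^ n) has_integral r ^ Suc n / Suc n) {0..r}"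
proof -
  have "((\<lambda>s. s ^ n) has_integral (r ^ Suc n / Suc n - 0 ^ Suc n / Suc n)) {0..r}"
    apply (rule fundamental_theorem_of_calculus[OF assms])
    unfolding has_real_derivative_iff_has_vector_derivative[symmetric]
  proof -
    fix x :: real
    have d1: "((\<lambda>x. x ^ Suc n) has_real_derivative real (Suc n) * x ^ n) (at x)"
      using DERIV_pow[of "Suc n" x] by simp
    then have "((\<lambda>x. x ^ Suc n / Suc n) has_real_derivative x ^ n) (at x)"
      using DERIV_cdivide[OF d1, of "real (Suc n)"] by simp
    then show "((\<lambda>x. x ^ Suc n / Suc n) has_real_derivative x ^ n) (at x within {0..r})"
      by (rule has_field_derivative_at_within)
  qed
  then show ?thesis by simp
qed


definition wav :: "nat \<Rightarrow> (real \<Rightarrow> real) \<Rightarrow> real \<Rightarrow> real" where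
  "wav N g r = integral {0..r} (\<lambda>s. s ^ (N - 1) * g s) / r ^ (N - 1)"

lemma wav_zero: "wav N g 0 = 0"
  by (simp add: wav_def)

lemma cont_Icc_sub: fixes g :: "real \<Rightarrow> real" shows "continuous_on {0..} g \<Longrightarrow> continuous_on {0..r} g"
  by (rule continuous_on_subset) auto

lemma wav_integrable:
  fixes g :: "real \<Rightarrow> real"
  assumes "continuous_on {0..} g"
  shows "(\<lambda>s. s ^ k * g s) integrable_on {0..r}"
proof -
  have cg: "continuous_on {0..r} g" by (rule cont_Icc_sub[OF assms])
  have "continuous_on {0..r} (\<lambda>s. s ^ k * g s)"
    by (intro continuous_on_mult continuous_on_power continuous_on_id cg)
  then show ?thesis by (rule integrable_continuous_interval)
qed

lemma wav_bound:
  assumes g: "continuous_on {0..} g" and r: "0 \<le> r"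
  shows "\<bar>wav N g r\<bar> \<le> integral {0..r} (\<lambda>s. \<bar>g s\<bar>)"
proof (cases "r = 0")
  case True then show ?thesis by (simp add: wav_def)
next
  case False
  then have rp: "r > 0" using r by auto
  have ia: "(\<lambda>s. \<bar>g s\<bar>) integrable_on {0..r}"
    by (rule integrable_continuous_interval) (intro continuous_intros cont_Icc_sub[OF g])
  have "\<bar>integral {0..r} (\<lambda>s. s ^ (N - 1) * g s)\<bar> \<le> integral {0..r} (\<lambda>s. r ^ (N - 1) * \<bar>g s\<bar>)"
  proof -
    have "norm (integral {0..r} (\<lambda>s. s ^ (N - 1) * g s)) \<le> integral {0..r} (\<lambda>s. r ^ (N - 1) * \<bar>g s\<bar>)"
    proof (rule integral_norm_bound_integral)
      show "(\<lambda>s. s ^ (N - 1) * g s) integrable_on {0..r}" by (rule wav_integrable[OF g])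
      show "(\<lambda>s. r ^ (N - 1) * \<bar>g s\<bar>) integrable_on {0..r}"
        using ia by (rule integrable_on_mult_right)
      fix x assume "x \<in> {0..r}"
      then have "\<bar>x ^ (N - 1)\<bar> \<le> r ^ (N - 1)" by (auto intro: power_mono)
      then show "norm (x ^ (N - 1) * g x) \<le> r ^ (N - 1) * \<bar>g x\<bar>"
        by (simp add: abs_mult mult_right_mono)
    qed
    then show ?thesis by simp
  qed
  also have "\<dots> = r ^ (N - 1) * integral {0..r} (\<lambda>s. \<bar>g s\<bar>)" by simp
  finally show ?thesis using rp
    by (simp add: wav_def abs_divide pos_divide_le_eq mult.commute)
qed

lemma wav_const:
  assumes "N \<ge> 1" "0 \<le> r"
  shows "wav N (\<lambda>s. c) r = c * r / N"
proof (cases "r = 0")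
  case True then show ?thesis by (simp add: wav_def)
next
  case False
  have "((\<lambda>s. s ^ (N - 1)) has_integral r ^ Suc (N - 1) / Suc (N - 1)) {0..r}"
    using integral_pow0[OF assms(2)] .
  then have "integral {0..r} (\<lambda>s. s ^ (N - 1)) = r ^ N / N" using assms(1)
    by (simp add: integral_unique)
  then have "integral {0..r} (\<lambda>s. s ^ (N - 1) * c) = c * r ^ N / N"
    by simp
  moreover have "r ^ N = r * r ^ (N - 1)" using assms(1)
    by (metis Suc_diff_1 le_less_trans less_numeral_extra(1) power_Suc zero_less_iff_neq_zero less_le_trans)
  ultimately show ?thesis using False by (simp add: wav_def)
qed

lemma wav_diff:
  assumes "continuous_on {0..} f" "continuous_on {0..} g"
  shows "wav N (\<lambda>s. f s - g s) r = wav N f r - wav N g r"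
proof -
  have "integral {0..r} (\<lambda>s. s ^ (N - 1) * (f s - g s))
      = integral {0..r} (\<lambda>s. s ^ (N - 1) * f s - s ^ (N - 1) * g s)"
    by (simp add: algebra_simps)
  also have "\<dots> = integral {0..r} (\<lambda>s. s ^ (N - 1) * f s) - integral {0..r} (\<lambda>s. s ^ (N - 1) * g s)"
    by (rule integral_diff) (auto intro: wav_integrable assms)
  finally show ?thesis by (simp add: wav_def diff_divide_distrib)
qed

lemma wav_deriv_pos:
  assumes g: "continuous_on {0..} g" and r: "r > 0"
  shows "(wav N g has_real_derivative (g r - real (N - 1) / r * wav N g r)) (at r)"
proof -
  let ?h = "\<lambda>s. s ^ (N - 1) * g s"
  have ch: "continuous_on {0..r+1} ?h" by (auto intro!: continuous_intros cont_Icc_sub[OF g])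
  have "((\<lambda>x. integral {0..x} ?h) has_real_derivative ?h r) (at r within {0..r+1})"
    by (rule integral_has_real_derivative[OF ch]) (use r in auto)
  moreover have "at r within {0..r+1} = at r"
    by (rule at_within_interior) (use r in auto)
  ultimately have d1: "((\<lambda>x. integral {0..x} ?h) has_real_derivative ?h r) (at r)" by simp
  have d2: "((\<lambda>x. x ^ (N - 1)) has_real_derivative real (N - 1) * r ^ (N - 1 - 1)) (at r)"
    using DERIV_pow[of "N - 1" r] by simp
  have "(wav N g has_real_derivative
      (?h r * r ^ (N - 1) - integral {0..r} ?h * (real (N - 1) * r ^ (N - 1 - 1))) / (r ^ (N - 1) * r ^ (N - 1))) (at r)"
    unfolding wav_def[abs_def]
    by (rule DERIV_divide[OF d1 d2]) (use r in simp)
  moreover have "(?h r * r ^ (N - 1) - integral {0..r} ?h * (real (N - 1) * r ^ (N - 1 - 1))) / (r ^ (N - 1) * r ^ (N - 1))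
      = g r - real (N - 1) / r * wav N g r"
  proof (cases "N - 1")
    case 0 then show ?thesis by (simp add: wav_def)
  next
    case (Suc m)
    then show ?thesis using r by (simp add: wav_def field_simps)
  qed
  ultimately show ?thesis by simp
qed

lemma wav_deriv0:
  assumes g: "continuous_on {0..} g" and N: "N \<ge> 1"
  shows "(wav N g has_real_derivative g 0 / N) (at 0 within {0..})"
proof -
  have "((\<lambda>y. (wav N g y - wav N g 0) / (y - 0)) \<longlongrightarrow> g 0 / N) (at 0 within {0..})"
    unfolding Lim_within
  proof (intro allI impI)
    fix e :: real assume e: "e > 0"
    have "continuous (at 0 within {0..}) g" using g by (simp add: continuous_on_eq_continuous_within)
    then obtain d where d: "d > 0" and hd0: "\<And>x. x \<in> {0..} \<Longrightarrow> 0 < dist x 0 \<and> dist x 0 < d \<Longrightarrow> dist (g x) (g 0) < e / 2"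
      unfolding continuous_within Lim_within using e by (meson half_gt_zero)
    have hd: "\<And>x. x \<in> {0..} \<Longrightarrow> dist x 0 < d \<Longrightarrow> dist (g x) (g 0) < e / 2"
      using hd0 e by (metis dist_self half_gt_zero zero_less_dist_iff)
    show "\<exists>d>0. \<forall>x\<in>{0..}. 0 < dist x 0 \<and> dist x 0 < d \<longrightarrow>
            dist ((wav N g x - wav N g 0) / (x - 0)) (g 0 / real N) < e"
    proof (intro exI conjI ballI impI)
      show "d > 0" by fact
      fix y :: real assume y: "y \<in> {0..}" "0 < dist y 0 \<and> dist y 0 < d"
      then have y0: "y > 0" and yd: "y < d" by auto
      have cg: "continuous_on {0..} (\<lambda>s. g s - g 0)" using g by (auto intro!: continuous_intros)
      have "wav N (\<lambda>s. g s - g 0) y = wav N g y - wav N (\<lambda>s. g 0) y"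
        by (rule wav_diff[OF g]) simp
      then have eq: "wav N g y = wav N (\<lambda>s. g s - g 0) y + g 0 * y / N"
        using wav_const[OF N, of y "g 0"] y0 by simp
      have "\<bar>wav N (\<lambda>s. g s - g 0) y\<bar> \<le> integral {0..y} (\<lambda>s. \<bar>g s - g 0\<bar>)"
        by (rule wav_bound[OF cg]) (use y0 in simp)
      also have "\<dots> \<le> integral {0..y} (\<lambda>s. e / 2)"
      proof (rule integral_le)
        show "(\<lambda>s. \<bar>g s - g 0\<bar>) integrable_on {0..y}"
          by (rule integrable_continuous_interval) (intro continuous_intros cont_Icc_sub[OF g])
        show "(\<lambda>s. e / 2) integrable_on {0..y}" by (rule integrable_const_ivl)
        fix x assume "x \<in> {0..y}"
        then show "\<bar>g x - g 0\<bar> \<le> e / 2" using hd[of x] yd by (auto simp: dist_real_def)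
      qed
      also have "\<dots> = e / 2 * y" using y0 by simp
      finally have b: "\<bar>wav N (\<lambda>s. g s - g 0) y\<bar> \<le> e / 2 * y" .
      have "(wav N g y - wav N g 0) / (y - 0) - g 0 / N = wav N (\<lambda>s. g s - g 0) y / y"
        using y0 by (simp add: eq wav_zero field_simps)
      then have "dist ((wav N g y - wav N g 0) / (y - 0)) (g 0 / real N) = \<bar>wav N (\<lambda>s. g s - g 0) y\<bar> / y"
        using y0 by (simp add: dist_real_def abs_divide)
      also have "\<dots> \<le> e / 2" using b y0 by (simp add: divide_le_eq)
      also have "\<dots> < e" using e by simp
      finally show "dist ((wav N g y - wav N g 0) / (y - 0)) (g 0 / real N) < e" .
    qed
  qed
  then show ?thesis by (simp add: has_field_derivative_iff)
qed

lemma wav_deriv_within: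
  assumes g: "continuous_on {0..} g" and N: "N \<ge> 1" and r: "r \<ge> 0"
  shows "(wav N g has_real_derivative (if r = 0 then g 0 / N else g r - real (N - 1) / r * wav N g r))
           (at r within {0..})"
proof (cases "r = 0")
  case True then show ?thesis using wav_deriv0[OF g N] by simp
next
  case False
  then show ?thesis using wav_deriv_pos[OF g, of r] r
    by (auto intro: has_field_derivative_at_within)
qed

lemma wav_cont:
  assumes g: "continuous_on {0..} g" and N: "N \<ge> 1"
  shows "continuous_on {0..} (wav N g)"
  by (rule DERIV_continuous_on[OF wav_deriv_within[OF g N]]) auto


lemma int_deriv_Ici:
  fixes f :: "real \<Rightarrow> real"
  assumes f: "continuous_on {0..} f" and r: "0 \<le> r"
  shows "((\<lambda>x. integral {0..x} f) has_real_derivative f r) (at r within {0..})"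
proof -
  have "((\<lambda>x. integral {0..x} f) has_real_derivative f r) (at r within {0..r+1})"
    by (rule integral_has_real_derivative[OF cont_Icc_sub[OF f]]) (use r in auto)
  then show ?thesis using at_Ici_local[of r "r+1"] r by simp
qed

lemma int_cont_Ici:
  fixes f :: "real \<Rightarrow> real"
  assumes f: "continuous_on {0..} f"
  shows "continuous_on {0..} (\<lambda>x. c + integral {0..x} f)"
  by (rule DERIV_continuous_on[where D=f])
     (auto intro!: derivative_eq_intros int_deriv_Ici[OF f])

lemma integrable0:
  fixes f :: "real \<Rightarrow> real"
  shows "continuous_on {0..} f \<Longrightarrow> f integrable_on {0..r}"
  by (rule integrable_continuous_interval, rule cont_Icc_sub)

primrec pic :: "nat \<Rightarrow> (real \<Rightarrow> real \<Rightarrow> real) \<Rightarrow> real \<Rightarrow> nat \<Rightarrow> (real \<Rightarrow> real) \<times> (real \<Rightarrow> real)" where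
  "pic N F u0 0 = (\<lambda>r. u0, \<lambda>r. 0)"
| "pic N F u0 (Suc n) = (\<lambda>r. u0 + integral {0..r} (snd (pic N F u0 n)),
      \<lambda>r. - wav N (\<lambda>s. F (fst (pic N F u0 n) s) (snd (pic N F u0 n) s)) r)"

locale picard =
  fixes N :: nat and F :: "real \<Rightarrow> real \<Rightarrow> real" and u0 L Fm :: real
  assumes N: "N \<ge> 1" and L: "L \<ge> 0"
    and Lip: "\<And>a b c d. \<bar>F a b - F c d\<bar> \<le> L * (\<bar>a - c\<bar> + \<bar>b - d\<bar>)"
    and Fb: "\<And>a b. \<bar>F a b\<bar> \<le> Fm"
    and Fc: "\<And>(S::real set) U V. continuous_on S U \<Longrightarrow> continuous_on S V \<Longrightarrow> continuous_on S (\<lambda>s. F (U s) (V s))"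
begin

definition "U n = fst (pic N F u0 n)"
definition "V n = snd (pic N F u0 n)"
definition "G n = (\<lambda>s. F (U n s) (V n s))"

lemma U0: "U 0 = (\<lambda>r. u0)" and V0: "V 0 = (\<lambda>r. 0)"
  and US: "U (Suc n) = (\<lambda>r. u0 + integral {0..r} (V n))"
  and VS: "V (Suc n) = (\<lambda>r. - wav N (G n) r)"
  by (simp_all add: U_def V_def G_def)

lemma cont_UV: "continuous_on {0..} (U n) \<and> continuous_on {0..} (V n)"
proof (induction n)
  case 0 then show ?case by (simp add: U0 V0)
next
  case (Suc n)
  then have cG: "continuous_on {0..} (G n)" unfolding G_def by (intro Fc[of "{0..}" "U n" "V n"]) auto
  show ?case unfolding US VS
    using int_cont_Ici[of "V n" u0] Suc wav_cont[OF cG N] by (auto intro!: continuous_intros)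
qed

lemma cont_G: "continuous_on {0..} (G n)"
  unfolding G_def using cont_UV by (intro Fc[of "{0..}" "U n" "V n"]) auto

lemma Fm_nonneg: "Fm \<ge> 0"
  using Fb[of 0 0] by simp

definition "K = 1 + L"

lemma int_abs_le:
  fixes f :: "real \<Rightarrow> real"
  assumes "continuous_on {0..} f" "0 \<le> r"
  shows "\<bar>integral {0..r} f\<bar> \<le> integral {0..r} (\<lambda>s. \<bar>f s\<bar>)"
proof -
  have "norm (integral {0..r} f) \<le> integral {0..r} (\<lambda>s. \<bar>f s\<bar>)"
    by (rule integral_norm_bound_integral)
       (auto intro!: integrable_continuous_interval continuous_intros cont_Icc_sub[OF assms(1)])
  then show ?thesis by simp
qed

lemma D_bound:
  assumes "0 \<le> r" "r \<le> T"
  shows "\<bar>U (Suc n) r - U n r\<bar> + \<bar>V (Suc n) r - V n r\<bar> \<le> Fm * T * (K * r) ^ n / fact n"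
  using assms
proof (induction n arbitrary: r)
  case 0
  have "\<bar>wav N (G 0) r\<bar> \<le> integral {0..r} (\<lambda>s. \<bar>G 0 s\<bar>)"
    by (rule wav_bound[OF cont_G]) (use 0 in simp)
  also have "\<dots> \<le> integral {0..r} (\<lambda>s. Fm)"
  proof (rule integral_le)
    show "(\<lambda>s. \<bar>G 0 s\<bar>) integrable_on {0..r}"
      by (intro integrable0 continuous_intros cont_G)
  qed (auto simp: Fb G_def)
  also have "\<dots> = Fm * r" using 0 by simp
  also have "\<dots> \<le> Fm * T" using 0 Fm_nonneg by (simp add: mult_left_mono)
  finally show ?case by (simp add: US VS U0 V0)
next
  case (Suc n)
  let ?dU = "\<lambda>s. U (Suc n) s - U n s" and ?dV = "\<lambda>s. V (Suc n) s - V n s"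
  have cdU: "continuous_on {0..} ?dU" and cdV: "continuous_on {0..} ?dV"
    using cont_UV by (auto intro!: continuous_intros)
  have r0: "0 \<le> r" using Suc by simp
  have A: "\<bar>U (Suc (Suc n)) r - U (Suc n) r\<bar> \<le> integral {0..r} (\<lambda>s. \<bar>?dV s\<bar>)"
  proof -
    have "U (Suc (Suc n)) r - U (Suc n) r = integral {0..r} ?dV"
      unfolding US
      by (simp add: integral_diff integrable_continuous_interval cont_Icc_sub cont_UV)
    then show ?thesis using int_abs_le[OF cdV r0] by simp
  qed
  have cdG: "continuous_on {0..} (\<lambda>s. G (Suc n) s - G n s)"
    using cont_G by (auto intro!: continuous_intros)
  have B: "\<bar>V (Suc (Suc n)) r - V (Suc n) r\<bar> \<le> integral {0..r} (\<lambda>s. L * (\<bar>?dU s\<bar> + \<bar>?dV s\<bar>))"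
  proof -
    have "V (Suc (Suc n)) r - V (Suc n) r = - wav N (\<lambda>s. G (Suc n) s - G n s) r"
      unfolding VS using wav_diff[OF cont_G[of "Suc n"] cont_G[of n], of N r] by simp
    then have "\<bar>V (Suc (Suc n)) r - V (Suc n) r\<bar> \<le> integral {0..r} (\<lambda>s. \<bar>G (Suc n) s - G n s\<bar>)"
      using wav_bound[OF cdG r0] by simp
    also have "\<dots> \<le> integral {0..r} (\<lambda>s. L * (\<bar>?dU s\<bar> + \<bar>?dV s\<bar>))"
    proof (rule integral_le)
      show "(\<lambda>s. \<bar>G (Suc n) s - G n s\<bar>) integrable_on {0..r}"
        by (intro integrable0 continuous_intros cdG)
      show "(\<lambda>s. L * (\<bar>?dU s\<bar> + \<bar>?dV s\<bar>)) integrable_on {0..r}"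
        by (intro integrable0 continuous_intros cdU cdV)
    qed (simp add: G_def Lip)
    finally show ?thesis .
  qed
  have "\<bar>U (Suc (Suc n)) r - U (Suc n) r\<bar> + \<bar>V (Suc (Suc n)) r - V (Suc n) r\<bar>
      \<le> integral {0..r} (\<lambda>s. \<bar>?dV s\<bar>) + integral {0..r} (\<lambda>s. L * (\<bar>?dU s\<bar> + \<bar>?dV s\<bar>))"
    using A B by simp
  also have "\<dots> = integral {0..r} (\<lambda>s. \<bar>?dV s\<bar> + L * (\<bar>?dU s\<bar> + \<bar>?dV s\<bar>))"
    by (rule integral_add[symmetric])
       (auto intro!: integrable_continuous_interval continuous_intros
            cont_Icc_sub[OF cdU] cont_Icc_sub[OF cdV])
  also have "\<dots> \<le> integral {0..r} (\<lambda>s. K * (Fm * T * (K * s) ^ n / fact n))"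
  proof (rule integral_le)
    show "(\<lambda>s. \<bar>?dV s\<bar> + L * (\<bar>?dU s\<bar> + \<bar>?dV s\<bar>)) integrable_on {0..r}"
      by (auto intro!: integrable_continuous_interval continuous_intros
            cont_Icc_sub[OF cdU] cont_Icc_sub[OF cdV])
    show "(\<lambda>s. K * (Fm * T * (K * s) ^ n / fact n)) integrable_on {0..r}"
      by (auto intro!: integrable_continuous_interval continuous_intros)
    fix s assume s: "s \<in> {0..r}"
    then have "\<bar>?dU s\<bar> + \<bar>?dV s\<bar> \<le> Fm * T * (K * s) ^ n / fact n"
      using Suc.IH[of s] Suc.prems by auto
    then have "\<bar>?dV s\<bar> + L * (\<bar>?dU s\<bar> + \<bar>?dV s\<bar>) \<le> (1 + L) * (\<bar>?dU s\<bar> + \<bar>?dV s\<bar>)"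
      by (simp add: algebra_simps)
    also have "\<dots> \<le> (1 + L) * (Fm * T * (K * s) ^ n / fact n)"
      using \<open>\<bar>?dU s\<bar> + \<bar>?dV s\<bar> \<le> _\<close> L by (intro mult_left_mono) auto
    also have "\<dots> = K * (Fm * T * (K * s) ^ n / fact n)" by (simp add: K_def)
    finally show "\<bar>?dV s\<bar> + L * (\<bar>?dU s\<bar> + \<bar>?dV s\<bar>) \<le> K * (Fm * T * (K * s) ^ n / fact n)" .
  qed
  also have "\<dots> = Fm * T * (K * r) ^ Suc n / fact (Suc n)"
  proof -
    have I: "integral {0..r} (\<lambda>s. s ^ n) = r ^ Suc n / Suc n"
      using integral_pow0[OF r0, of n] by (simp add: integral_unique)
    have "(\<lambda>s. K * (Fm * T * (K * s) ^ n / fact n)) = (\<lambda>s. (K * Fm * T * K ^ n / fact n) * s ^ n)"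
      by (simp add: power_mult_distrib field_simps)
    then have "integral {0..r} (\<lambda>s. K * (Fm * T * (K * s) ^ n / fact n))
        = (K * Fm * T * K ^ n / fact n) * (r ^ Suc n / Suc n)"
      by (simp only: integral_mult_right I)
    also have "\<dots> = Fm * T * (K * r) ^ Suc n / fact (Suc n)"
      by (simp add: power_mult_distrib field_simps)
    finally show ?thesis .
  qed
  finally show ?case .
qed


lemma K_nonneg: "K \<ge> 0" using L by (simp add: K_def)

definition "Ulim r = u0 + (\<Sum>i. U (Suc i) r - U i r)"
definition "Vlim r = (\<Sum>i. V (Suc i) r - V i r)"
definition "Glim s = F (Ulim s) (Vlim s)"

lemma summ_M: "summable (\<lambda>n. Fm * T * (K * T) ^ n / fact n)"
proof -
  have "summable (\<lambda>n. (Fm * T) * (inverse (fact n) * (K * T) ^ n))"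
    by (intro summable_mult summable_exp)
  then show ?thesis by (simp add: field_simps)
qed

lemma M_bound:
  assumes "0 \<le> r" "r \<le> T"
  shows "Fm * T * (K * r) ^ n / fact n \<le> Fm * T * (K * T) ^ n / fact n"
proof -
  have "(K * r) ^ n \<le> (K * T) ^ n"
    using assms K_nonneg by (intro power_mono mult_left_mono) auto
  moreover have "Fm * T \<ge> 0" using Fm_nonneg assms by simp
  ultimately show ?thesis by (intro divide_right_mono mult_left_mono) auto
qed

lemma unifU: "uniform_limit {0..T} U Ulim sequentially"
proof -
  have "uniform_limit {0..T} (\<lambda>n r. \<Sum>i<n. U (Suc i) r - U i r) (\<lambda>r. \<Sum>i. U (Suc i) r - U i r) sequentially"
  proof (rule Weierstrass_m_test[OF _ summ_M])
    fix n r assume r: "r \<in> {0..T}"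
    have "\<bar>U (Suc n) r - U n r\<bar> \<le> Fm * T * (K * r) ^ n / fact n"
      using D_bound[of r T n] r by auto
    then show "norm (U (Suc n) r - U n r) \<le> Fm * T * (K * T) ^ n / fact n"
      using M_bound[of r T n] r by auto
  qed
  from uniform_limit_add[OF uniform_limit_const[of "\<lambda>r. u0" "{0..T}"] this]
  have "uniform_limit {0..T} (\<lambda>n r. u0 + (\<Sum>i<n. U (Suc i) r - U i r)) Ulim sequentially"
    by (simp add: Ulim_def[abs_def])
  moreover have "\<And>n r. u0 + (\<Sum>i<n. U (Suc i) r - U i r) = U n r"
    by (simp add: sum_lessThan_telescope[of "\<lambda>i. U i r" for r] U0)
  ultimately show ?thesis by simp
qed

lemma unifV: "uniform_limit {0..T} V Vlim sequentially"
proof -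
  have "uniform_limit {0..T} (\<lambda>n r. \<Sum>i<n. V (Suc i) r - V i r) (\<lambda>r. \<Sum>i. V (Suc i) r - V i r) sequentially"
  proof (rule Weierstrass_m_test[OF _ summ_M])
    fix n r assume r: "r \<in> {0..T}"
    have "\<bar>V (Suc n) r - V n r\<bar> \<le> Fm * T * (K * r) ^ n / fact n"
      using D_bound[of r T n] r by auto
    then show "norm (V (Suc n) r - V n r) \<le> Fm * T * (K * T) ^ n / fact n"
      using M_bound[of r T n] r by auto
  qed
  moreover have "\<And>n r. (\<Sum>i<n. V (Suc i) r - V i r) = V n r"
    by (simp add: sum_lessThan_telescope[of "\<lambda>i. V i r" for r] V0)
  ultimately show ?thesis by (simp add: Vlim_def[abs_def])
qed

lemma cont_Ulim: "continuous_on {0..} Ulim"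
  by (rule cont_Ici_from_Icc, rule uniform_limit_theorem[OF _ unifU])
     (use cont_UV in \<open>auto intro!: always_eventually cont_Icc_sub\<close>)

lemma cont_Vlim: "continuous_on {0..} Vlim"
  by (rule cont_Ici_from_Icc, rule uniform_limit_theorem[OF _ unifV])
     (use cont_UV in \<open>auto intro!: always_eventually cont_Icc_sub\<close>)

lemma cont_Glim: "continuous_on {0..} Glim"
  unfolding Glim_def[abs_def] using cont_Ulim cont_Vlim by (intro Fc[of "{0..}" Ulim Vlim])

lemma unifG: "uniform_limit {0..T} (\<lambda>n s. s ^ (N - 1) * G n s) (\<lambda>s. s ^ (N - 1) * Glim s) sequentially"
proof (rule uniform_limitI)
  fix e :: real assume e: "e > 0"
  define C where "C = \<bar>T\<bar> ^ (N - 1) * L"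
  have C0: "C \<ge> 0" using L by (simp add: C_def)
  define e' where "e' = e / (2 * (C + 1))"
  have e': "e' > 0" using e C0 by (simp add: e'_def)
  have ev: "\<forall>\<^sub>F n in sequentially. (\<forall>x\<in>{0..T}. dist (U n x) (Ulim x) < e') \<and> (\<forall>x\<in>{0..T}. dist (V n x) (Vlim x) < e')"
    using uniform_limitD[OF unifU e'] uniform_limitD[OF unifV e'] by (rule eventually_conj)
  show "\<forall>\<^sub>F n in sequentially. \<forall>x\<in>{0..T}. dist (x ^ (N - 1) * G n x) (x ^ (N - 1) * Glim x) < e"
  proof (rule eventually_mono[OF ev], intro ballI)
    fix n x assume h: "(\<forall>x\<in>{0..T}. dist (U n x) (Ulim x) < e') \<and> (\<forall>x\<in>{0..T}. dist (V n x) (Vlim x) < e')"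
      and x: "x \<in> {0..T}"
    have "\<bar>U n x - Ulim x\<bar> < e'" "\<bar>V n x - Vlim x\<bar> < e'"
      using h x by (auto simp: dist_real_def)
    then have a: "\<bar>U n x - Ulim x\<bar> + \<bar>V n x - Vlim x\<bar> \<le> 2 * e'" by linarith
    have "dist (x ^ (N - 1) * G n x) (x ^ (N - 1) * Glim x) = \<bar>x\<bar> ^ (N - 1) * \<bar>G n x - Glim x\<bar>"
      by (simp add: dist_real_def abs_mult power_abs right_diff_distrib[symmetric])
    also have "\<dots> \<le> \<bar>T\<bar> ^ (N - 1) * (L * (\<bar>U n x - Ulim x\<bar> + \<bar>V n x - Vlim x\<bar>))"
      using x by (intro mult_mono power_mono) (auto simp: G_def Glim_def Lip)
    also have "\<dots> \<le> \<bar>T\<bar> ^ (N - 1) * (L * (2 * e'))"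
      using a L by (intro mult_left_mono) auto
    also have "\<dots> = C * 2 * e'" by (simp add: C_def)
    also have "\<dots> < e" using e C0 by (simp add: e'_def field_simps)
    finally show "dist (x ^ (N - 1) * G n x) (x ^ (N - 1) * Glim x) < e" .
  qed
qed

lemma Ulim_eq:
  assumes r: "0 \<le> r"
  shows "Ulim r = u0 + integral {0..r} Vlim"
proof -
  obtain I J where I: "\<And>n. (V n has_integral I n) {0..r}" and J: "(Vlim has_integral J) {0..r}"
    and IJ: "I \<longlonglongrightarrow> J"
    using uniform_limit_integral[OF unifV[of r] _ sequentially_bot] cont_UV cont_Icc_sub by blast
  have "(\<lambda>n. U n r) \<longlonglongrightarrow> Ulim r"
    by (rule tendsto_uniform_limitI[OF unifU[of r]]) (use r in auto)
  then have 1: "(\<lambda>n. U (Suc n) r) \<longlonglongrightarrow> Ulim r" by (rule LIMSEQ_Suc)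
  have "(\<lambda>n. U (Suc n) r) = (\<lambda>n. u0 + I n)"
    using I by (auto simp: US integral_unique)
  then have 2: "(\<lambda>n. U (Suc n) r) \<longlonglongrightarrow> u0 + J" using IJ by (auto intro: tendsto_intros)
  have "Ulim r = u0 + J" using LIMSEQ_unique[OF 1 2] .
  then show ?thesis using J by (simp add: integral_unique)
qed

lemma Vlim_eq:
  assumes r: "0 \<le> r"
  shows "Vlim r = - wav N Glim r"
proof -
  have cc: "\<And>n. continuous_on {0..r} (\<lambda>s. s ^ (N - 1) * G n s)"
    by (intro continuous_intros cont_Icc_sub cont_G)
  obtain I J where I: "\<And>n. ((\<lambda>s. s ^ (N - 1) * G n s) has_integral I n) {0..r}"
    and J: "((\<lambda>s. s ^ (N - 1) * Glim s) has_integral J) {0..r}"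
    and IJ: "I \<longlonglongrightarrow> J"
    using uniform_limit_integral[OF unifG[of r] cc sequentially_bot] by blast
  have "(\<lambda>n. V n r) \<longlonglongrightarrow> Vlim r"
    by (rule tendsto_uniform_limitI[OF unifV[of r]]) (use r in auto)
  then have 1: "(\<lambda>n. V (Suc n) r) \<longlonglongrightarrow> Vlim r" by (rule LIMSEQ_Suc)
  have "(\<lambda>n. V (Suc n) r) = (\<lambda>n. - (I n / r ^ (N - 1)))"
    using I by (auto simp: VS wav_def integral_unique)
  moreover have "(\<lambda>n. - (I n * inverse (r ^ (N - 1)))) \<longlonglongrightarrow> - (J * inverse (r ^ (N - 1)))"
    by (intro tendsto_minus tendsto_mult[OF IJ tendsto_const])
  ultimately have 2: "(\<lambda>n. V (Suc n) r) \<longlonglongrightarrow> - (J / r ^ (N - 1))" by (simp add: divide_inverse)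
  have "Vlim r = - (J / r ^ (N - 1))" using LIMSEQ_unique[OF 1 2] .
  then show ?thesis using J by (simp add: integral_unique wav_def)
qed


lemma exists_sol:
  "\<exists>u v. continuous_on {0..} u \<and> continuous_on {0..} v \<and> u 0 = u0 \<and> v 0 = 0 \<and>
     (\<forall>r\<ge>0. u r = u0 + integral {0..r} v) \<and>
     (\<forall>r\<ge>0. (u has_real_derivative v r) (at r within {0..})) \<and>
     (\<forall>r>0. (v has_real_derivative (- F (u r) (v r) - real (N - 1) / r * v r)) (at r)) \<and>
     (v has_real_derivative - F u0 0 / N) (at 0 within {0..})"
proof (intro exI conjI allI impI)
  show "continuous_on {0..} Ulim" by (rule cont_Ulim)
  show "continuous_on {0..} Vlim" by (rule cont_Vlim)
  show U00: "Ulim 0 = u0" using Ulim_eq[of 0] by simp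
  show V00: "Vlim 0 = 0" using Vlim_eq[of 0] by (simp add: wav_zero)
  fix r :: real
  assume r: "0 \<le> r"
  then show "Ulim r = u0 + integral {0..r} Vlim" by (rule Ulim_eq)
  have "((\<lambda>x. u0 + integral {0..x} Vlim) has_real_derivative 0 + Vlim r) (at r within {0..})"
    by (intro DERIV_add DERIV_const int_deriv_Ici[OF cont_Vlim r])
  then have "((\<lambda>x. u0 + integral {0..x} Vlim) has_real_derivative Vlim r) (at r within {0..})"
    by simp
  then show "(Ulim has_real_derivative Vlim r) (at r within {0..})"
    by (rule has_field_derivative_transform_within[where d=1]) (use r Ulim_eq in auto)
next
  fix r :: real assume r: "0 < r"
  have "((\<lambda>x. - wav N Glim x) has_real_derivative - (Glim r - real (N - 1) / r * wav N Glim r)) (at r)"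
    by (intro DERIV_minus wav_deriv_pos[OF cont_Glim r])
  moreover have "- (Glim r - real (N - 1) / r * wav N Glim r) = - F (Ulim r) (Vlim r) - real (N - 1) / r * Vlim r"
    using Vlim_eq[of r] r by (simp add: Glim_def)
  ultimately have "((\<lambda>x. - wav N Glim x) has_real_derivative - F (Ulim r) (Vlim r) - real (N - 1) / r * Vlim r) (at r)"
    by simp
  then show "(Vlim has_real_derivative - F (Ulim r) (Vlim r) - real (N - 1) / r * Vlim r) (at r)"
    by (rule has_field_derivative_transform_within_open[where S="{0<..}"]) (use r Vlim_eq in auto)
next
  have "((\<lambda>x. - wav N Glim x) has_real_derivative - (Glim 0 / N)) (at 0 within {0..})"
    by (intro DERIV_minus wav_deriv0[OF cont_Glim N])
  moreover have "Glim 0 = F u0 0" using Ulim_eq[of 0] Vlim_eq[of 0] by (simp add: Glim_def wav_zero)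
  ultimately have "((\<lambda>x. - wav N Glim x) has_real_derivative - F u0 0 / N) (at 0 within {0..})"
    by simp
  then show "(Vlim has_real_derivative - F u0 0 / N) (at 0 within {0..})"
    by (rule has_field_derivative_transform_within[where d=1]) (use Vlim_eq in auto)
qed

end

definition clp :: "real \<Rightarrow> real \<Rightarrow> real \<Rightarrow> real" where "clp a b x = max a (min b x)"

definition Ft :: "real \<Rightarrow> real \<Rightarrow> real \<Rightarrow> real \<Rightarrow> real" where
  "Ft p M a b = (clp 0 1 a) powr p + M * \<bar>clp (-2) 2 b\<bar> powr (2 * p / (p + 1))"

lemma clp_lip: "a \<le> b \<Longrightarrow> \<bar>clp a b x - clp a b y\<bar> \<le> \<bar>x - y\<bar>"
  by (simp add: clp_def)

lemma powr_lip_aux: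
  fixes x y c e :: real
  assumes e: "e \<ge> 1" and xy: "0 \<le> y" "y < x" "x \<le> c"
  shows "x powr e - y powr e \<le> e * c powr (e - 1) * (x - y)"
proof -
  have "continuous_on {y..x} (\<lambda>t. t powr e)"
    by (rule continuous_on_powr'[OF continuous_on_id continuous_on_const]) (use xy e in auto)
  moreover have "(\<lambda>t. t powr e) differentiable (at z)" if "y < z" "z < x" for z
  proof -
    have "z > 0" using xy that by linarith
    then show ?thesis using has_real_derivative_powr[of z e] real_differentiable_def by blast
  qed
  ultimately obtain l z where z: "y < z" "z < x" and d: "DERIV (\<lambda>t. t powr e) z :> l"
    and eq: "x powr e - y powr e = (x - y) * l"
    using MVT[OF xy(2)] by blast
  have "z > 0" using z xy by linarith
  then have "l = e * z powr (e - 1)"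
    using DERIV_unique[OF d has_real_derivative_powr] by blast
  moreover have "z powr (e - 1) \<le> c powr (e - 1)"
    using e z xy by (intro powr_mono2) auto
  ultimately have "l \<le> e * c powr (e - 1)" using e by (simp add: mult_left_mono)
  then have "(x - y) * l \<le> (x - y) * (e * c powr (e - 1))" using xy by (intro mult_left_mono) auto
  then show ?thesis using eq by (simp add: algebra_simps)
qed

lemma powr_lip:
  fixes x y c e :: real
  assumes e: "e \<ge> 1" and xy: "0 \<le> x" "x \<le> c" "0 \<le> y" "y \<le> c"
  shows "\<bar>x powr e - y powr e\<bar> \<le> e * c powr (e - 1) * \<bar>x - y\<bar>"
proof -
  consider "x = y" | "y < x" | "x < y" by linarith
  then show ?thesis
  proof cases
    case 2
    have "y powr e < x powr e" by (rule powr_less_mono2) (use e xy 2 in auto)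
    then have "\<bar>x powr e - y powr e\<bar> = x powr e - y powr e" "\<bar>x - y\<bar> = x - y" using 2 by auto
    then show ?thesis using powr_lip_aux[OF e xy(3) 2 xy(2)] by simp
  next
    case 3
    have "x powr e < y powr e" by (rule powr_less_mono2) (use e xy 3 in auto)
    then have "\<bar>x powr e - y powr e\<bar> = y powr e - x powr e" "\<bar>x - y\<bar> = y - x" using 3 by auto
    then show ?thesis using powr_lip_aux[OF e xy(1) 3 xy(4)] by simp
  qed simp
qed

definition "qq (p::real) = 2 * p / (p + 1)"
definition "LFt (p::real) (M::real) = p + \<bar>M\<bar> * qq p * 2 powr (qq p - 1)"
definition "FmFt (p::real) (M::real) = 1 + \<bar>M\<bar> * 2 powr qq p"

lemma qq_ge1: "(p::real) \<ge> 1 \<Longrightarrow> qq p \<ge> 1"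
  by (simp add: qq_def field_simps)

lemma Ft_lip:
  assumes p: "p \<ge> 1"
  shows "\<bar>Ft p M a b - Ft p M c d\<bar> \<le> LFt p M * (\<bar>a - c\<bar> + \<bar>b - d\<bar>)"
proof -
  have c1: "0 \<le> clp 0 1 a" "clp 0 1 a \<le> 1" "0 \<le> clp 0 1 c" "clp 0 1 c \<le> 1"
    by (auto simp: clp_def)
  have c2: "\<bar>clp (-2) 2 b\<bar> \<le> 2" "\<bar>clp (-2) 2 d\<bar> \<le> 2"
    by (auto simp: clp_def)
  have 1: "\<bar>clp 0 1 a powr p - clp 0 1 c powr p\<bar> \<le> p * \<bar>a - c\<bar>"
  proof -
    have "\<bar>clp 0 1 a powr p - clp 0 1 c powr p\<bar> \<le> p * 1 powr (p - 1) * \<bar>clp 0 1 a - clp 0 1 c\<bar>"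
      by (rule powr_lip[OF p c1])
    also have "\<dots> \<le> p * \<bar>a - c\<bar>" using clp_lip[of 0 1 a c] p by simp
    finally show ?thesis .
  qed
  have 2: "\<bar>\<bar>clp (-2) 2 b\<bar> powr qq p - \<bar>clp (-2) 2 d\<bar> powr qq p\<bar> \<le> qq p * 2 powr (qq p - 1) * \<bar>b - d\<bar>"
  proof -
    have "\<bar>\<bar>clp (-2) 2 b\<bar> powr qq p - \<bar>clp (-2) 2 d\<bar> powr qq p\<bar>
        \<le> qq p * 2 powr (qq p - 1) * \<bar>\<bar>clp (-2) 2 b\<bar> - \<bar>clp (-2) 2 d\<bar>\<bar>"
      by (rule powr_lip[OF qq_ge1[OF p]]) (use c2 in auto)
    also have "\<dots> \<le> qq p * 2 powr (qq p - 1) * \<bar>b - d\<bar>"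
    proof (rule mult_left_mono)
      show "\<bar>\<bar>clp (-2) 2 b\<bar> - \<bar>clp (-2) 2 d\<bar>\<bar> \<le> \<bar>b - d\<bar>"
        using clp_lip[of "-2" 2 b d] by linarith
      show "0 \<le> qq p * 2 powr (qq p - 1)" using qq_ge1[OF p] by simp
    qed
    finally show ?thesis .
  qed
  have "\<bar>Ft p M a b - Ft p M c d\<bar> \<le> \<bar>clp 0 1 a powr p - clp 0 1 c powr p\<bar>
       + \<bar>M\<bar> * \<bar>\<bar>clp (-2) 2 b\<bar> powr qq p - \<bar>clp (-2) 2 d\<bar> powr qq p\<bar>"
  proof -
    have "Ft p M a b - Ft p M c d = (clp 0 1 a powr p - clp 0 1 c powr p)
       + M * (\<bar>clp (-2) 2 b\<bar> powr qq p - \<bar>clp (-2) 2 d\<bar> powr qq p)"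
      unfolding Ft_def qq_def by (simp add: algebra_simps)
    moreover have "\<bar>(clp 0 1 a powr p - clp 0 1 c powr p)
       + M * (\<bar>clp (-2) 2 b\<bar> powr qq p - \<bar>clp (-2) 2 d\<bar> powr qq p)\<bar>
      \<le> \<bar>clp 0 1 a powr p - clp 0 1 c powr p\<bar>
       + \<bar>M * (\<bar>clp (-2) 2 b\<bar> powr qq p - \<bar>clp (-2) 2 d\<bar> powr qq p)\<bar>"
      by (rule abs_triangle_ineq)
    ultimately show ?thesis by (simp add: abs_mult)
  qed
  also have "\<dots> \<le> p * \<bar>a - c\<bar> + \<bar>M\<bar> * (qq p * 2 powr (qq p - 1) * \<bar>b - d\<bar>)"
    using 1 2 by (intro add_mono mult_left_mono) auto
  also have "\<dots> \<le> LFt p M * (\<bar>a - c\<bar> + \<bar>b - d\<bar>)"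
  proof -
    have "0 \<le> \<bar>M\<bar> * qq p * 2 powr (qq p - 1)" using qq_ge1[OF p] by simp
    then have h1: "p \<le> LFt p M" and h2: "\<bar>M\<bar> * qq p * 2 powr (qq p - 1) \<le> LFt p M"
      using p unfolding LFt_def by linarith+
    have "p * \<bar>a - c\<bar> \<le> LFt p M * \<bar>a - c\<bar>" using h1 by (rule mult_right_mono) simp
    moreover have "\<bar>M\<bar> * (qq p * 2 powr (qq p - 1) * \<bar>b - d\<bar>) \<le> LFt p M * \<bar>b - d\<bar>"
      using mult_right_mono[OF h2, of "\<bar>b - d\<bar>"] by (simp add: mult.assoc)
    ultimately have "p * \<bar>a - c\<bar> + \<bar>M\<bar> * (qq p * 2 powr (qq p - 1) * \<bar>b - d\<bar>) \<le> LFt p M * \<bar>a - c\<bar> + LFt p M * \<bar>b - d\<bar>"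
      by linarith
    then show ?thesis by (simp add: distrib_left)
  qed
  finally show ?thesis .
qed

lemma Ft_bound:
  assumes p: "p \<ge> 1"
  shows "\<bar>Ft p M a b\<bar> \<le> FmFt p M"
proof -
  have "clp 0 1 a powr p \<le> 1" using p by (intro powr_le1) (auto simp: clp_def)
  moreover have "\<bar>clp (-2) 2 b\<bar> powr qq p \<le> 2 powr qq p"
    using qq_ge1[OF p] by (intro powr_mono2) (auto simp: clp_def)
  ultimately have "\<bar>clp 0 1 a powr p\<bar> + \<bar>M\<bar> * \<bar>clp (-2) 2 b\<bar> powr qq p \<le> FmFt p M"
    unfolding FmFt_def by (auto intro!: add_mono mult_left_mono)
  moreover have "\<bar>Ft p M a b\<bar> \<le> \<bar>clp 0 1 a powr p\<bar> + \<bar>M\<bar> * \<bar>clp (-2) 2 b\<bar> powr qq p"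
  proof -
    have "\<bar>clp 0 1 a powr p + M * \<bar>clp (-2) 2 b\<bar> powr qq p\<bar> \<le> \<bar>clp 0 1 a powr p\<bar> + \<bar>M * \<bar>clp (-2) 2 b\<bar> powr qq p\<bar>"
      by (rule abs_triangle_ineq)
    then show ?thesis unfolding Ft_def qq_def[symmetric] by (simp add: abs_mult)
  qed
  ultimately show ?thesis by linarith
qed

lemma Ft_cont:
  fixes S :: "real set"
  assumes p: "p \<ge> 1" and "continuous_on S U" "continuous_on S V"
  shows "continuous_on S (\<lambda>s. Ft p M (U s) (V s))"
proof -
  have c1: "continuous_on S (\<lambda>s. clp 0 1 (U s))" unfolding clp_def
    by (intro continuous_on_max continuous_on_min continuous_on_const assms(2))
  have c2: "continuous_on S (\<lambda>s. \<bar>clp (-2) 2 (V s)\<bar>)" unfolding clp_def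
    by (intro continuous_on_rabs continuous_on_max continuous_on_min continuous_on_const assms(3))
  have c3: "continuous_on S (\<lambda>s. clp 0 1 (U s) powr p)"
    by (rule continuous_on_powr'[OF c1 continuous_on_const]) (use p in \<open>auto simp: clp_def\<close>)
  have c4: "continuous_on S (\<lambda>s. \<bar>clp (-2) 2 (V s)\<bar> powr qq p)"
    by (rule continuous_on_powr'[OF c2 continuous_on_const]) (use qq_ge1[OF p] in auto)
  show ?thesis unfolding Ft_def qq_def[symmetric]
    by (intro continuous_on_add continuous_on_mult c3 c4 continuous_on_const)
qed

lemma sol_exists:
  assumes p: "p \<ge> 1" and N: "N \<ge> 1"
  shows "\<exists>u v. continuous_on {0..} u \<and> continuous_on {0..} v \<and> u 0 = 1 \<and> v 0 = 0 \<and>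
     (\<forall>r\<ge>0. u r = 1 + integral {0..r} v) \<and>
     (\<forall>r\<ge>0. (u has_real_derivative v r) (at r within {0..})) \<and>
     (\<forall>r>0. (v has_real_derivative (- Ft p M (u r) (v r) - real (N - 1) / r * v r)) (at r)) \<and>
     (v has_real_derivative - Ft p M 1 0 / N) (at 0 within {0..})"
proof -
  have L: "LFt p M \<ge> 0" using p qq_ge1[OF p] by (simp add: LFt_def)
  interpret picard N "Ft p M" 1 "LFt p M" "FmFt p M"
  proof
    show "1 \<le> N" by (rule N)
    show "0 \<le> LFt p M" by (rule L)
  qed (rule Ft_lip[OF p], rule Ft_bound[OF p], rule Ft_cont[OF p])
  show ?thesis by (rule exists_sol)
qed


lemma cont_induct:
  fixes P :: "real \<Rightarrow> bool"
  assumes start: "\<exists>d>0. \<forall>s. 0 < s \<and> s < d \<longrightarrow> P s"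
    and clo: "\<And>r. r > 0 \<Longrightarrow> (\<forall>s. 0 < s \<and> s < r \<longrightarrow> P s) \<Longrightarrow> P r"
    and opn: "\<And>r. r > 0 \<Longrightarrow> (\<forall>s. 0 < s \<and> s \<le> r \<longrightarrow> P s) \<Longrightarrow> \<exists>e>0. \<forall>s. r < s \<and> s < r + e \<longrightarrow> P s"
    and r: "r > 0"
  shows "P r"
proof (rule ccontr)
  assume nP: "\<not> P r"
  define A where "A = {s. s > 0 \<and> \<not> P s}"
  have rA: "r \<in> A" using r nP by (simp add: A_def)
  have bdd: "bdd_below A" unfolding A_def by (rule bdd_belowI[of _ 0]) auto
  define c where "c = Inf A"
  have low: "\<And>a. a \<in> A \<Longrightarrow> c \<le> a" unfolding c_def using bdd by (rule cInf_lower[rotated])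
  have below: "\<And>s. 0 < s \<Longrightarrow> s < c \<Longrightarrow> P s"
    using low unfolding A_def by force
  obtain d where d: "d > 0" "\<forall>s. 0 < s \<and> s < d \<longrightarrow> P s" using start by blast
  have cd: "c \<ge> d"
  proof (rule ccontr)
    assume "\<not> c \<ge> d"
    then have "Inf A < d" by (simp add: c_def)
    then obtain a where "a \<in> A" "a < d" using cInf_less_iff[of A d] rA bdd by blast
    then show False using d unfolding A_def by auto
  qed
  then have c0: "c > 0" using d by simp
  have Pc: "P c" using clo[OF c0] below by blast
  then have "\<forall>s. 0 < s \<and> s \<le> c \<longrightarrow> P s" using below by (metis order_le_less)
  then obtain e where e: "e > 0" "\<forall>s. c < s \<and> s < c + e \<longrightarrow> P s" using opn[OF c0] by blast
  have "Inf A < c + e" using e c_def by simp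
  then obtain a where a: "a \<in> A" "a < c + e" using cInf_less_iff[of A "c + e"] rA bdd by blast
  have "c \<le> a" using low a by simp
  then have "P a" using e a Pc by (cases "a = c") auto
  then show False using a unfolding A_def by simp
qed

lemma mu_q: "p > 0 \<Longrightarrow> mu_star1 p * qq p powr (p / (p + 1)) = p + 1"
proof -
  assume p: "p > 0"
  have "(p + 1) / (2 * p) * qq p = 1" using p by (simp add: qq_def)
  then have "((p + 1) / (2 * p)) powr (p / (p + 1)) * qq p powr (p / (p + 1)) = 1"
    by (metis powr_mult powr_one_eq_one)
  then show ?thesis unfolding mu_star1_def by (simp add: mult.assoc)
qed

locale sol =
  fixes p M :: real and N :: nat and u v :: "real \<Rightarrow> real"
  assumes p: "p > 1" and N: "N \<ge> 1" and Mc: "M \<le> - mu_star1 p" and M1: "N = 1 \<Longrightarrow> M < - mu_star1 p"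
    and cu: "continuous_on {0..} u" and cv: "continuous_on {0..} v"
    and u0: "u 0 = 1" and v0: "v 0 = 0"
    and ui: "\<And>r. r \<ge> 0 \<Longrightarrow> u r = 1 + integral {0..r} v"
    and du: "\<And>r. r \<ge> 0 \<Longrightarrow> (u has_real_derivative v r) (at r within {0..})"
    and dv: "\<And>r. r > 0 \<Longrightarrow> (v has_real_derivative (- Ft p M (u r) (v r) - real (N - 1) / r * v r)) (at r)"
    and dv0: "(v has_real_derivative - Ft p M 1 0 / N) (at 0 within {0..})"
begin

definition "q = qq p"

lemma q_bounds: "1 < q" "q < 2"
  using p by (auto simp: q_def qq_def field_simps)

lemma Ft10: "Ft p M 1 0 = 1"
  by (simp add: Ft_def clp_def)

lemma du_at: "r > 0 \<Longrightarrow> (u has_real_derivative v r) (at r)"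
proof -
  assume r: "r > 0"
  have "(u has_real_derivative v r) (at r within {0<..})"
    by (rule DERIV_subset[OF du]) (use r in auto)
  then show ?thesis using at_within_open[of r "{0<..}"] r by simp
qed

lemma isCont_u: "r > 0 \<Longrightarrow> isCont u r"
  using du_at by (rule DERIV_isCont)

lemma isCont_v: "r > 0 \<Longrightarrow> isCont v r"
  using dv by (rule DERIV_isCont)

definition "P r \<longleftrightarrow> 0 < u r \<and> v r < 0 \<and> (v r)\<^sup>2 < q * u r powr (p + 1)"

lemma u_le1:
  assumes r: "r \<ge> 0" and neg: "\<And>s. 0 \<le> s \<Longrightarrow> s \<le> r \<Longrightarrow> v s \<le> 0"
  shows "u r \<le> 1"
proof -
  have "integral {0..r} v \<le> integral {0..r} (\<lambda>s. 0)"
    by (rule integral_le) (use neg in \<open>auto intro!: integrable0 cv\<close>)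
  then show ?thesis using ui[OF r] by simp
qed

lemma start: "\<exists>d>0. \<forall>s. 0 < s \<and> s < d \<longrightarrow> P s"
proof -
  have "((\<lambda>y. (v y - v 0) / (y - 0)) \<longlongrightarrow> - Ft p M 1 0 / N) (at 0 within {0..})"
    using dv0 by (simp add: has_field_derivative_iff)
  then have "((\<lambda>y. v y / y) \<longlongrightarrow> - 1 / N) (at_right 0)"
    by (simp add: v0 Ft10 at_within_Ici_at_right)
  moreover have "- 1 / real N < 0" using N by simp
  ultimately have e1: "eventually (\<lambda>y. v y / y < 0) (at_right 0)"
    by (rule order_tendstoD)
  have tu: "(u \<longlongrightarrow> 1) (at_right 0)" and tv: "(v \<longlongrightarrow> 0) (at_right 0)"
  proof -
    have "(u \<longlongrightarrow> u 0) (at 0 within {0..})" "(v \<longlongrightarrow> v 0) (at 0 within {0..})"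
      using cu cv unfolding continuous_on_def by auto
    then show "(u \<longlongrightarrow> 1) (at_right 0)" "(v \<longlongrightarrow> 0) (at_right 0)"
      by (simp_all add: u0 v0 at_within_Ici_at_right)
  qed
  have e2: "eventually (\<lambda>y. u y > 0) (at_right 0)"
    using order_tendstoD(1)[OF tu, of 0] by simp
  have "((\<lambda>y. q * u y powr (p + 1) - (v y)\<^sup>2) \<longlongrightarrow> q * 1 powr (p + 1) - 0\<^sup>2) (at_right 0)"
    by (intro tendsto_intros tu tv) auto
  then have e3: "eventually (\<lambda>y. q * u y powr (p + 1) - (v y)\<^sup>2 > 0) (at_right 0)"
    using q_bounds by (intro order_tendstoD(1)) auto
  have "eventually (\<lambda>y. y > 0 \<longrightarrow> P y) (at_right 0)"
    using e1 e2 e3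
  proof eventually_elim
    case (elim y)
    show ?case
    proof
      assume y: "y > 0"
      then have "v y < 0" using elim(1) by (simp add: divide_less_0_iff)
      then show "P y" using elim y by (simp add: P_def)
    qed
  qed
  then obtain b where "b > 0" "\<forall>y>0. y < b \<longrightarrow> y > 0 \<longrightarrow> P y"
    unfolding eventually_at_right_field by auto
  then show ?thesis by auto
qed

lemma opn:
  assumes r: "r > 0" and h: "\<forall>s. 0 < s \<and> s \<le> r \<longrightarrow> P s"
  shows "\<exists>e>0. \<forall>s. r < s \<and> s < r + e \<longrightarrow> P s"
proof -
  have Pr: "P r" using h r by auto
  have tu: "(u \<longlongrightarrow> u r) (at r)" and tv: "(v \<longlongrightarrow> v r) (at r)"
    using isCont_u[OF r] isCont_v[OF r] by (auto simp: isCont_def)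
  have e1: "eventually (\<lambda>y. u y > 0) (at r)"
    using order_tendstoD(1)[OF tu, of 0] Pr by (simp add: P_def)
  have e2: "eventually (\<lambda>y. v y < 0) (at r)"
    using order_tendstoD(2)[OF tv, of 0] Pr by (simp add: P_def)
  have "((\<lambda>y. q * u y powr (p + 1) - (v y)\<^sup>2) \<longlongrightarrow> q * u r powr (p + 1) - (v r)\<^sup>2) (at r)"
    using Pr by (intro tendsto_intros tu tv) (auto simp: P_def)
  then have e3: "eventually (\<lambda>y. q * u y powr (p + 1) - (v y)\<^sup>2 > 0) (at r)"
    using Pr by (intro order_tendstoD(1)) (auto simp: P_def)
  have "eventually (\<lambda>y. P y) (at r)"
    using e1 e2 e3 by eventually_elim (simp add: P_def)
  then obtain d where d: "d > 0" "\<forall>y. y \<noteq> r \<and> dist y r < d \<longrightarrow> P y"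
    unfolding eventually_at by auto
  show ?thesis
    by (rule exI[of _ d]) (use d in \<open>auto simp: dist_real_def\<close>)
qed


lemma key_pos:
  fixes U W r :: real
  assumes U: "0 < U" and W: "0 < W" and r: "r > 0"
    and WU: "W\<^sup>2 = q * U powr (p + 1)"
  shows "0 < q * ((p + 1) * U powr p * (- W)) - 2 * (- W) * (- (U powr p + M * W powr q) - real (N - 1) / r * (- W))"
proof -
  define s where "s = p / (p + 1)"
  define A where "A = U powr p"
  have A: "A > 0" using U by (simp add: A_def)
  have qs: "q / 2 = s" "q * (p + 1) = 2 * p" using p by (simp_all add: q_def qq_def s_def field_simps)
  have "W powr q = (W powr 2) powr s"
    by (simp add: powr_powr qs(1)[symmetric])
  also have "\<dots> = (q * U powr (p + 1)) powr s" using W WU by simp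
  also have "\<dots> = q powr s * U powr ((p + 1) * s)" by (simp add: powr_mult powr_powr)
  also have "(p + 1) * s = p" using p by (simp add: s_def)
  finally have B: "W powr q = q powr s * A" by (simp add: A_def)
  define c where "c = (p + 1) + M * q powr s"
  have mq: "mu_star1 p * q powr s = p + 1" using mu_q[of p] p by (simp add: q_def s_def)
  have qs0: "q powr s > 0" using q_bounds by simp
  have c0: "c \<le> 0"
  proof -
    have "M * q powr s \<le> - mu_star1 p * q powr s" using Mc qs0 by (intro mult_right_mono) auto
    then show ?thesis using mq by (simp add: c_def)
  qed
  have c1: "N = 1 \<Longrightarrow> c < 0"
  proof -
    assume "N = 1"
    then have "M * q powr s < - mu_star1 p * q powr s" using M1 qs0 by (intro mult_strict_right_mono) auto
    then show ?thesis using mq by (simp add: c_def)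
  qed
  have eq: "q * ((p + 1) * U powr p * (- W)) - 2 * (- W) * (- (U powr p + M * W powr q) - real (N - 1) / r * (- W))
      = - 2 * W * A * c + 2 * real (N - 1) / r * W\<^sup>2"
  proof -
    have "q * ((p + 1) * U powr p * (- W)) = - (q * (p + 1)) * A * W" by (simp add: A_def algebra_simps)
    also have "\<dots> = - (2 * p) * A * W" using qs(2) by simp
    finally have "q * ((p + 1) * U powr p * (- W)) = - (2 * p) * A * W" .
    then show ?thesis by (simp add: B c_def A_def algebra_simps power2_eq_square)
  qed
  show ?thesis
  proof (cases "N = 1")
    case True
    then have "- 2 * W * A * c > 0" using c1 A W by (simp add: mult_pos_neg mult_neg_neg)
    then show ?thesis unfolding eq using True by simp
  next
    case False
    then have "real (N - 1) > 0" using N by simp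
    then have "2 * real (N - 1) / r * W\<^sup>2 > 0" using W r by simp
    moreover have "- 2 * W * A * c \<ge> 0" using c0 A W
      by (simp add: mult_nonneg_nonpos mult_nonpos_nonpos mult_pos_pos less_imp_le)
    ultimately show ?thesis unfolding eq by linarith
  qed
qed

lemma clo:
  assumes r: "r > 0" and h: "\<forall>s. 0 < s \<and> s < r \<longrightarrow> P s"
  shows "P r"
proof -
  have tu: "(u \<longlongrightarrow> u r) (at_left r)" and tv: "(v \<longlongrightarrow> v r) (at_left r)"
    using isCont_u[OF r] isCont_v[OF r] by (auto simp: isCont_def intro: tendsto_within_subset)
  have evP: "eventually P (at_left r)"
    unfolding eventually_at_left_field using r h by (intro exI[of _ 0]) auto
  have vr0: "v r \<le> 0"
    by (rule tendsto_upperbound[OF tv]) (use evP in \<open>auto elim: eventually_mono simp: P_def\<close>)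
  have vneg: "\<And>s. 0 \<le> s \<Longrightarrow> s \<le> r \<Longrightarrow> v s \<le> 0"
  proof -
    fix s assume "0 \<le> s" "s \<le> r"
    then consider "s = 0" | "0 < s \<and> s < r" | "s = r" by linarith
    then show "v s \<le> 0" using v0 vr0 h by cases (auto simp: P_def)
  qed
  have ule1: "\<And>s. 0 \<le> s \<Longrightarrow> s \<le> r \<Longrightarrow> u s \<le> 1"
    using vneg by (intro u_le1) auto
  have ur: "u r > 0"
  proof -
    define f where "f s = u s * exp (2 * s)" for s
    have "f (r / 2) \<le> f r"
    proof (rule DERIV_nonneg_imp_increasing_open[of "r / 2" r f])
      show "r / 2 \<le> r" using r by simp
      show "continuous_on {r / 2..r} f" unfolding f_def
        by (intro continuous_intros continuous_on_subset[OF cu]) (use r in auto)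
      fix s assume s: "r / 2 < s" "s < r"
      then have Ps: "P s" and s0: "s > 0" using h r by auto
      have us1: "u s \<le> 1" using ule1 s r by auto
      have us: "u s > 0" using Ps by (simp add: P_def)
      have "u s powr (p + 1) \<le> u s powr 2" using us us1 p by (intro powr_mono') auto
      have a: "(v s)\<^sup>2 < q * u s powr (p + 1)" using Ps by (simp add: P_def)
      have b: "q * u s powr (p + 1) \<le> q * u s powr 2"
        using \<open>u s powr (p + 1) \<le> u s powr 2\<close> q_bounds by (intro mult_left_mono) auto
      have c: "u s powr 2 = (u s)\<^sup>2" using us by simp
      have d: "q * (u s)\<^sup>2 \<le> 2 * (u s)\<^sup>2" using q_bounds by (intro mult_right_mono) auto
      have "(v s)\<^sup>2 < 2 * (u s)\<^sup>2" using a b[unfolded c] d by linarith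
      moreover have "0 \<le> (u s)\<^sup>2" by simp
      moreover have "(2 * u s)\<^sup>2 = 4 * (u s)\<^sup>2" "(- v s)\<^sup>2 = (v s)\<^sup>2" by (simp_all add: power_mult_distrib)
      ultimately have sq: "(- v s)\<^sup>2 < (2 * u s)\<^sup>2" by linarith
      have "0 \<le> 2 * u s" using us by simp
      then have "- v s < 2 * u s" by (rule power2_less_imp_less[OF sq])
      have de: "((\<lambda>s. exp (2 * s)) has_real_derivative exp (2 * s) * 2) (at s)"
        using DERIV_chain2[OF DERIV_exp DERIV_cmult_Id[of 2 s UNIV]] by simp
      have "(f has_real_derivative (v s * exp (2 * s) + exp (2 * s) * 2 * u s)) (at s)"
        unfolding f_def[abs_def] by (rule DERIV_mult[OF du_at[OF s0] de])
      moreover have "v s * exp (2 * s) + exp (2 * s) * 2 * u s \<ge> 0"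
      proof -
        have "v s * exp (2 * s) + exp (2 * s) * 2 * u s = exp (2 * s) * (v s + 2 * u s)"
          by (simp add: algebra_simps)
        moreover have "v s + 2 * u s \<ge> 0" using \<open>- v s < 2 * u s\<close> by simp
        ultimately show ?thesis by simp
      qed
      ultimately show "\<exists>y. (f has_real_derivative y) (at s) \<and> 0 \<le> y" by blast
    qed
    moreover have "f (r / 2) > 0"
    proof -
      have "0 < r / 2 \<and> r / 2 < r" using r by simp
      then have "P (r / 2)" using h by blast
      then show ?thesis by (simp add: f_def P_def)
    qed
    ultimately have "u r * exp (2 * r) > 0" by (simp add: f_def)
    then show ?thesis by (simp add: zero_less_mult_iff)
  qed
  have vr: "v r < 0"
  proof (rule ccontr)
    assume "\<not> v r < 0"
    then have v00: "v r = 0" using vr0 by simp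
    have "clp 0 1 (u r) > 0" using ur by (simp add: clp_def)
    then have "Ft p M (u r) (v r) > 0" using v00 by (simp add: Ft_def clp_def)
    then have "- Ft p M (u r) (v r) - real (N - 1) / r * v r < 0" using v00 by simp
    from DERIV_neg_dec_left[OF dv[OF r] this] obtain d where d: "d > 0" "\<forall>h>0. h < d \<longrightarrow> v r < v (r - h)"
      by blast
    define hh where "hh = min (d / 2) (r / 2)"
    have "v r < v (r - hh)" using d by (simp add: hh_def r)
    moreover have "P (r - hh)" using h r d by (simp add: hh_def)
    ultimately show False using v00 by (simp add: P_def)
  qed
  have "((\<lambda>y. q * u y powr (p + 1) - (v y)\<^sup>2) \<longlongrightarrow> q * u r powr (p + 1) - (v r)\<^sup>2) (at_left r)"
    using ur by (intro tendsto_intros tu tv) auto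
  then have Hle: "0 \<le> q * u r powr (p + 1) - (v r)\<^sup>2"
    by (rule tendsto_lowerbound) (use evP in \<open>auto elim: eventually_mono simp: P_def\<close>)
  have Hlt: "0 < q * u r powr (p + 1) - (v r)\<^sup>2"
  proof (rule ccontr)
    assume "\<not> ?thesis"
    then have H0: "(v r)\<^sup>2 = q * u r powr (p + 1)" using Hle by simp
    have ur1: "u r \<le> 1" using ule1 r by simp
    have "u r powr (p + 1) \<le> 1" using ur ur1 p by (intro powr_le1) auto
    then have "q * u r powr (p + 1) \<le> 2 * 1" using q_bounds by (intro mult_mono) auto
    then have "(v r)\<^sup>2 \<le> 2\<^sup>2" using H0 by simp
    then have "\<bar>v r\<bar> \<le> \<bar>2\<bar>" by (simp only: abs_le_square_iff)
    then have vr2: "\<bar>v r\<bar> \<le> 2" by simp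
    have Fr: "Ft p M (u r) (v r) = u r powr p + M * \<bar>v r\<bar> powr q"
      using ur ur1 vr2 by (simp add: Ft_def clp_def q_def qq_def)
    define H where "H y = q * u y powr (p + 1) - (v y)\<^sup>2" for y
    have dpow: "((\<lambda>y. u y powr (p + 1)) has_real_derivative ((p + 1) * u r powr (p + 1 - 1) * v r)) (at r)"
      using DERIV_chain2[OF has_real_derivative_powr[OF ur, of "p + 1"] du_at[OF r]] by simp
    define D where "D = - Ft p M (u r) (v r) - real (N - 1) / r * v r"
    have dq: "((\<lambda>y. q * u y powr (p + 1)) has_real_derivative q * ((p + 1) * u r powr (p + 1 - 1) * v r)) (at r)"
      by (rule DERIV_cmult[OF dpow])
    have dvv: "((\<lambda>y. v y * v y) has_real_derivative D * v r + D * v r) (at r)"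
      using DERIV_mult[OF dv[OF r] dv[OF r]] by (simp add: D_def)
    have "(H has_real_derivative q * ((p + 1) * u r powr (p + 1 - 1) * v r) - (D * v r + D * v r)) (at r)"
      using DERIV_diff[OF dq dvv] unfolding H_def[abs_def] power2_eq_square .
    moreover have "q * ((p + 1) * u r powr (p + 1 - 1) * v r) - (D * v r + D * v r)
        = q * ((p + 1) * u r powr (p + 1 - 1) * v r)
        - 2 * v r * (- Ft p M (u r) (v r) - real (N - 1) / r * v r)"
      by (simp add: D_def algebra_simps)
    ultimately have "(H has_real_derivative q * ((p + 1) * u r powr (p + 1 - 1) * v r)
        - 2 * v r * (- Ft p M (u r) (v r) - real (N - 1) / r * v r)) (at r)"
      by (simp only:)
    moreover have "0 < q * ((p + 1) * u r powr (p + 1 - 1) * v r)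
        - 2 * v r * (- Ft p M (u r) (v r) - real (N - 1) / r * v r)"
    proof -
      have "\<bar>v r\<bar> = - v r" using vr by simp
      moreover have "(- v r)\<^sup>2 = q * u r powr (p + 1)" using H0 by simp
      ultimately have "0 < q * ((p + 1) * u r powr p * (- (- v r)))
          - 2 * (- (- v r)) * (- (u r powr p + M * (- v r) powr q) - real (N - 1) / r * (- (- v r)))"
        using key_pos[OF ur _ r, of "- v r"] vr by simp
      then show ?thesis using Fr \<open>\<bar>v r\<bar> = - v r\<close> by simp
    qed
    ultimately obtain d where d: "d > 0" "\<forall>h>0. h < d \<longrightarrow> H (r - h) < H r"
      using DERIV_pos_inc_left by blast
    define hh where "hh = min (d / 2) (r / 2)"
    have "H (r - hh) < H r" using d by (simp add: hh_def r)
    moreover have "P (r - hh)" using h r d by (simp add: hh_def)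
    ultimately show False using H0 by (simp add: P_def H_def)
  qed
  show "P r" using ur vr Hlt by (simp add: P_def)
qed

lemma inv: "r > 0 \<Longrightarrow> P r"
  by (rule cont_induct[OF start clo opn])

end

lemma tangent_powr:
  fixes x y s :: real
  assumes s: "0 < s" "s < 1" and x: "x > 0" and y: "y > 0"
  shows "x powr s \<le> y powr s + s * y powr (s - 1) * (x - y)"
proof -
  have "x powr s * y powr (1 - s) \<le> s * x + (1 - s) * y"
    using Youngs_inequality_0[of s "1 - s" x y] s x y by simp
  then have "x powr s * y powr (1 - s) * y powr (s - 1) \<le> (s * x + (1 - s) * y) * y powr (s - 1)"
    using y by (intro mult_right_mono) auto
  moreover have "y powr (1 - s) * y powr (s - 1) = 1"
    using y by (simp flip: powr_add)
  moreover have "y * y powr (s - 1) = y powr s"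
  proof -
    have "y powr s = y powr (1 + (s - 1))" by simp
    also have "\<dots> = y powr 1 * y powr (s - 1)" by (rule powr_add)
    also have "\<dots> = y * y powr (s - 1)" using y by simp
    finally show ?thesis by simp
  qed
  ultimately show ?thesis by (simp add: algebra_simps)
qed

lemma PhiM_Z:
  fixes p M X :: real
  assumes p: "p > 1" and X: "X > 0"
  defines "a \<equiv> 2 / (p - 1)" and "s \<equiv> p / (p + 1)"
  shows "X powr (1 - p) * PhiM N p M X
     = 1 + M * (a\<^sup>2 * X powr (1 - p)) powr s - Kc N p * (p - 1) / 2 * (a\<^sup>2 * X powr (1 - p))"
proof -
  have a: "a > 0" using p by (simp add: a_def)
  have t1: "X powr (1 - p) * X powr (p - 1) = 1" using X by (simp flip: powr_add)
  have e: "(1 - p) + (p - 1) / (p + 1) = (1 - p) * s" using p by (simp add: s_def field_simps)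
  have t2: "X powr (1 - p) * X powr ((p - 1) / (p + 1)) = X powr ((1 - p) * s)"
    using X e by (simp flip: powr_add)
  have t3: "(a\<^sup>2 * X powr (1 - p)) powr s = a powr (2 * p / (p + 1)) * X powr ((1 - p) * s)"
  proof -
    have "(a\<^sup>2 * X powr (1 - p)) powr s = (a powr 2) powr s * (X powr (1 - p)) powr s"
      using a by (simp add: powr_mult)
    also have "\<dots> = a powr (2 * s) * X powr ((1 - p) * s)" by (simp add: powr_powr)
    also have "2 * s = 2 * p / (p + 1)" by (simp add: s_def)
    finally show ?thesis .
  qed
  have t4: "Kc N p * (p - 1) / 2 * a\<^sup>2 = 2 * Kc N p / (p - 1)"
  proof -
    define d where "d = p - 1"
    have d: "d > 0" using p by (simp add: d_def)
    have "Kc N p * d / 2 * (2 / d)\<^sup>2 = 2 * Kc N p / d"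
      using d by (simp add: power2_eq_square field_simps)
    then show ?thesis unfolding a_def d_def .
  qed
  have "X powr (1 - p) * PhiM N p M X = X powr (1 - p) * X powr (p - 1)
      + M * a powr (2 * p / (p + 1)) * (X powr (1 - p) * X powr ((p - 1) / (p + 1)))
      - 2 * Kc N p / (p - 1) * X powr (1 - p)"
    unfolding PhiM_def a_def[symmetric] by (simp add: algebra_simps)
  also have "\<dots> = 1 + M * a powr (2 * p / (p + 1)) * X powr ((1 - p) * s)
      - (Kc N p * (p - 1) / 2 * a\<^sup>2) * X powr (1 - p)"
    by (simp only: t1 t2 t4)
  also have "\<dots> = 1 + M * (a\<^sup>2 * X powr (1 - p)) powr s - Kc N p * (p - 1) / 2 * (a\<^sup>2 * X powr (1 - p))"
    unfolding t3 by (simp add: algebra_simps)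
  finally show ?thesis .
qed

lemma roots_contra:
  fixes p M X1 X2 :: real and N :: nat
  assumes p: "p > 1" and N: "N \<ge> 1" and Mc: "M \<le> - mu_star1 p" and M1: "N = 1 \<Longrightarrow> M < - mu_star1 p"
    and X: "0 < X1" "X1 < X2" "PhiM N p M X1 = 0" "PhiM N p M X2 = 0"
    and T: "(2 / (p - 1) * X1)\<^sup>2 \<le> qq p * X1 powr (p + 1)"
  shows False
proof -
  define a where "a = 2 / (p - 1)"
  define s where "s = p / (p + 1)"
  define c where "c = Kc N p * (p - 1) / 2"
  define q where "q = qq p"
  define Z1 where "Z1 = a\<^sup>2 * X1 powr (1 - p)"
  define Z2 where "Z2 = a\<^sup>2 * X2 powr (1 - p)"
  have a: "a > 0" using p by (simp add: a_def)
  have s: "0 < s" "s < 1" using p by (auto simp: s_def)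
  have q: "q > 0" using p by (simp add: q_def qq_def)
  have X2: "X2 > 0" using X by simp
  have g1: "1 + M * Z1 powr s - c * Z1 = 0"
    using PhiM_Z[OF p X(1), of N M] X(3) by (simp add: Z1_def a_def s_def c_def)
  have g2: "1 + M * Z2 powr s - c * Z2 = 0"
    using PhiM_Z[OF p X2, of N M] X(4) by (simp add: Z2_def a_def s_def c_def)
  have Z1: "Z1 > 0" and Z2: "Z2 > 0" using a X X2 by (simp_all add: Z1_def Z2_def)
  have Z21: "Z2 < Z1"
  proof -
    have "X2 powr (1 - p) < X1 powr (1 - p)" using p X by (intro powr_less_mono2_neg) auto
    then show ?thesis using a by (simp add: Z1_def Z2_def)
  qed
  have Z1q: "Z1 \<le> q"
  proof -
    have X1p: "X1 powr (p + 1) > 0" using X by simp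
    have "X1 powr (1 - p) = X1 powr 2 / X1 powr (p + 1)"
      by (simp add: powr_diff[symmetric])
    also have "X1 powr 2 = X1\<^sup>2" using X by simp
    finally have "Z1 = (a * X1)\<^sup>2 / X1 powr (p + 1)"
      by (simp add: Z1_def power_mult_distrib)
    also have "\<dots> \<le> q" using T X1p by (simp add: pos_divide_le_eq a_def q_def)
    finally show ?thesis .
  qed
  have mu0: "mu_star1 p > 0" using p by (simp add: mu_star1_def)
  have M0: "M \<le> 0" using Mc mu0 by simp
  define E where "E = M * (s * Z1 powr (s - 1))"
  have A1: "M * Z2 powr s \<ge> M * Z1 powr s + E * (Z2 - Z1)"
  proof -
    have "Z2 powr s \<le> Z1 powr s + s * Z1 powr (s - 1) * (Z2 - Z1)" by (rule tangent_powr[OF s Z2 Z1])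
    then have "M * (Z1 powr s + s * Z1 powr (s - 1) * (Z2 - Z1)) \<le> M * Z2 powr s"
      using M0 by (rule mult_left_mono_neg)
    then show ?thesis by (simp add: E_def algebra_simps)
  qed
  have A2: "M * q powr s \<ge> M * Z1 powr s + E * (q - Z1)"
  proof -
    have "q powr s \<le> Z1 powr s + s * Z1 powr (s - 1) * (q - Z1)" by (rule tangent_powr[OF s q Z1])
    then have "M * (Z1 powr s + s * Z1 powr (s - 1) * (q - Z1)) \<le> M * q powr s"
      using M0 by (rule mult_left_mono_neg)
    then show ?thesis by (simp add: E_def algebra_simps)
  qed
  have "(E - c) * (Z2 - Z1) \<le> 0" using A1 g1 g2 by (simp add: algebra_simps)
  then have Ec: "E - c \<ge> 0" using Z21 by (simp add: mult_le_0_iff)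
  have "1 + M * q powr s - c * q \<ge> (E - c) * (q - Z1)" using A2 g1 by (simp add: algebra_simps)
  moreover have "(E - c) * (q - Z1) \<ge> 0" using Ec Z1q by simp
  moreover have "1 + M * q powr s - c * q < 0"
  proof -
    have mq: "mu_star1 p * q powr s = p + 1" using mu_q[of p] p by (simp add: q_def s_def)
    have qs0: "q powr s > 0" using q by simp
    have b1: "M * q powr s \<le> - (p + 1)"
      using mult_right_mono[OF Mc, of "q powr s"] qs0 mq by simp
    have b2: "N = 1 \<Longrightarrow> M * q powr s < - (p + 1)"
      using mult_strict_right_mono[OF M1 qs0] mq by simp
    have c': "c = ((real N - 2) * p - real N) / 2"
    proof -
      have "p - 1 \<noteq> 0" using p by simp
      then show ?thesis by (simp add: c_def Kc_def)
    qed
    have p1: "p + 1 \<noteq> 0" using p by simp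
    have "c * q = ((real N - 2) * p - real N) * p / (p + 1)"
      unfolding c' q_def qq_def using p1 by (simp add: field_simps)
    then have "- p - c * q = (- p * (p + 1) - ((real N - 2) * p - real N) * p) / (p + 1)"
      using p1 by (simp add: field_simps)
    also have "- p * (p + 1) - ((real N - 2) * p - real N) * p = - p * (real N - 1) * (p - 1)"
      by (simp add: algebra_simps)
    finally have cq: "- p - c * q = - p * (real N - 1) * (p - 1) / (p + 1)" .
    show ?thesis
    proof (cases "N = 1")
      case True then show ?thesis using b2 cq by simp
    next
      case False
      then have "real N - 1 > 0" using N by simp
      then have "- p * (real N - 1) * (p - 1) / (p + 1) < 0" using p
        by (simp add: mult_pos_pos divide_neg_pos)
      then show ?thesis using b1 cq by linarith
    qed
  qed
  ultimately show False by linarith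
qed


context sol begin

lemma deriv_u: "r > 0 \<Longrightarrow> deriv u r = v r"
  by (rule DERIV_imp_deriv[OF du_at])

lemma region:
  assumes r: "r > 0"
  shows "0 < u r" "u r \<le> 1" "v r < 0" "\<bar>v r\<bar> \<le> 2" "(v r)\<^sup>2 < q * u r powr (p + 1)"
proof -
  have Pr: "P r" using inv[OF r] .
  then show ur: "0 < u r" and "v r < 0" and vq: "(v r)\<^sup>2 < q * u r powr (p + 1)" by (auto simp: P_def)
  have "\<And>s. 0 \<le> s \<Longrightarrow> s \<le> r \<Longrightarrow> v s \<le> 0"
  proof -
    fix s :: real assume "0 \<le> s" "s \<le> r"
    then consider "s = 0" | "s > 0" by linarith
    then show "v s \<le> 0" using v0 inv by cases (auto simp: P_def less_imp_le)
  qed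
  then show ur1: "u r \<le> 1" using r by (intro u_le1) auto
  have "u r powr (p + 1) \<le> 1" using ur ur1 p by (intro powr_le1) auto
  then have "q * u r powr (p + 1) \<le> 2 * 1" using q_bounds by (intro mult_mono) auto
  then have "(v r)\<^sup>2 \<le> 2\<^sup>2" using vq by simp
  then have "\<bar>v r\<bar> \<le> \<bar>2\<bar>" by (simp only: abs_le_square_iff)
  then show "\<bar>v r\<bar> \<le> 2" by simp
qed

lemma Ft_eq:
  assumes r: "r > 0"
  shows "Ft p M (u r) (v r) = \<bar>u r\<bar> powr (p - 1) * u r + M * \<bar>v r\<bar> powr (2 * p / (p + 1))"
proof -
  have ur: "u r > 0" "u r \<le> 1" and vr: "\<bar>v r\<bar> \<le> 2" using region[OF r] by auto
  have "u r powr (p - 1) * u r = u r powr (p - 1) * u r powr 1" using ur by simp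
  also have "\<dots> = u r powr ((p - 1) + 1)" by (rule powr_add[symmetric])
  also have "\<dots> = u r powr p" by simp
  finally have "u r powr p = u r powr (p - 1) * u r" by simp
  moreover have "clp 0 1 (u r) = u r" "clp (-2) 2 (v r) = v r" using ur vr by (auto simp: clp_def)
  ultimately show ?thesis using ur by (simp add: Ft_def)
qed

definition "u2 r = (if r = 0 then - 1 / real N else - Ft p M (u r) (v r) - real (N - 1) / r * v r)"

lemma cont_u2: "continuous_on {0..} u2"
  unfolding continuous_on_def
proof
  fix x :: real assume x: "x \<in> {0..}"
  have cF: "continuous_on {0..} (\<lambda>s. Ft p M (u s) (v s))"
    using p by (intro Ft_cont cu cv) auto
  have tF: "((\<lambda>s. Ft p M (u s) (v s)) \<longlongrightarrow> Ft p M (u x) (v x)) (at x within {0..})"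
    using cF x by (simp add: continuous_on_def)
  have tv: "(v \<longlongrightarrow> v x) (at x within {0..})" using cv x by (simp add: continuous_on_def)
  define E where "E s = - Ft p M (u s) (v s) - real (N - 1) / s * v s" for s
  have ev: "eventually (\<lambda>s. E s = u2 s) (at x within {0..})"
    unfolding eventually_at
    by (rule exI[of _ "if x = 0 then 1 else x"]) (use x in \<open>auto simp: E_def u2_def dist_real_def\<close>)
  show "(u2 \<longlongrightarrow> u2 x) (at x within {0..})"
  proof (cases "x = 0")
    case False
    then have "(E \<longlongrightarrow> E x) (at x within {0..})"
      unfolding E_def by (intro tendsto_intros tF tv) auto
    then have "(E \<longlongrightarrow> u2 x) (at x within {0..})" using False by (simp add: E_def u2_def)
    then show ?thesis by (rule Lim_transform_eventually[OF _ ev])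
  next
    case True
    have "((\<lambda>y. (v y - v 0) / (y - 0)) \<longlongrightarrow> - Ft p M 1 0 / N) (at 0 within {0..})"
      using dv0 by (simp add: has_field_derivative_iff)
    then have tq: "((\<lambda>y. v y / y) \<longlongrightarrow> - 1 / N) (at 0 within {0..})" by (simp add: v0 Ft10)
    have "((\<lambda>s. - Ft p M (u s) (v s) - real (N - 1) * (v s / s)) \<longlongrightarrow> - Ft p M (u 0) (v 0) - real (N - 1) * (- 1 / N)) (at 0 within {0..})"
      using tF True by (intro tendsto_intros tq) auto
    moreover have "- Ft p M (u 0) (v 0) - real (N - 1) * (- 1 / N) = - 1 / real N"
      using N by (simp add: u0 v0 Ft10 of_nat_diff field_simps)
    moreover have "(\<lambda>s. - Ft p M (u s) (v s) - real (N - 1) * (v s / s)) = E" by (auto simp: E_def)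
    ultimately have "(E \<longlongrightarrow> u2 0) (at 0 within {0..})" by (simp add: u2_def)
    then show ?thesis using True by (intro Lim_transform_eventually[OF _ ev]) simp
  qed
qed

lemma gs: "ground_state N p M u"
  unfolding ground_state_def
proof (intro conjI exI allI impI)
  show "\<And>r. 0 \<le> r \<Longrightarrow> 0 \<le> u r"
  proof -
    fix r :: real assume "0 \<le> r"
    then consider "r = 0" | "r > 0" by linarith
    then show "0 \<le> u r" using u0 region by cases (auto simp: less_imp_le)
  qed
  show "continuous_on {0..} u2" by (rule cont_u2)
  show "v 0 = 0" by (rule v0)
  fix r :: real
  show "0 \<le> r \<Longrightarrow> (u has_real_derivative v r) (at r within {0..})" by (rule du)
  show "0 \<le> r \<Longrightarrow> (v has_real_derivative u2 r) (at r within {0..})"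
  proof -
    assume "0 \<le> r"
    then consider "r = 0" | "r > 0" by linarith
    then show ?thesis
    proof cases
      case 1 then show ?thesis using dv0 by (simp add: u2_def Ft10)
    next
      case 2 then show ?thesis using dv[OF 2] by (auto simp: u2_def intro: has_field_derivative_at_within)
    qed
  qed
  show "0 < r \<Longrightarrow> - u2 r - (real N - 1) / r * v r
      = \<bar>u r\<bar> powr (p - 1) * u r + M * \<bar>v r\<bar> powr (2 * p / (p + 1))"
  proof -
    assume r: "0 < r"
    have "real (N - 1) = real N - 1" using N by (simp add: of_nat_diff)
    then show ?thesis using r Ft_eq[OF r] by (simp add: u2_def)
  qed
qed

lemma ineq: "\<forall>r>0. (deriv u r)\<^sup>2 < 2 * p / (p + 1) * u r powr (p + 1)"
  using region deriv_u by (simp add: q_def qq_def)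

end

context sol begin

definition "aa = 2 / (p - 1)"

lemma aa_pos: "aa > 0" using p by (simp add: aa_def)

definition "xi t = exp (aa * t) * u (exp t)"
definition "eta t = - (exp ((aa + 1) * t) * v (exp t))"

lemma traj_eq: "traj p u t = (xi t, eta t)"
proof -
  have "exp t powr (2 / (p - 1)) = exp (aa * t)" by (simp add: exp_powr_real aa_def mult.commute)
  moreover have "(p + 1) / (p - 1) = aa + 1" using p by (simp add: aa_def field_simps)
  moreover have "exp t powr (aa + 1) = exp ((aa + 1) * t)" by (simp add: exp_powr_real mult.commute)
  ultimately show ?thesis by (simp add: traj_def xi_def eta_def deriv_u)
qed

lemma xi_pos: "xi t > 0"
  using region(1)[of "exp t"] by (simp add: xi_def)

lemma rel: "(eta t)\<^sup>2 < q * xi t powr (p + 1)"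
proof -
  define U where "U = u (exp t)"
  define V where "V = v (exp t)"
  have U: "U > 0" and UV: "V\<^sup>2 < q * U powr (p + 1)" using region[of "exp t"] by (auto simp: U_def V_def)
  have e: "aa * (p + 1) = 2 * (aa + 1)" using p by (simp add: aa_def field_simps)
  have "xi t powr (p + 1) = exp (aa * t) powr (p + 1) * U powr (p + 1)"
    by (simp add: xi_def U_def powr_mult)
  also have "exp (aa * t) powr (p + 1) = exp (2 * (aa + 1) * t)"
  proof -
    have "aa * t * (p + 1) = (aa * (p + 1)) * t" by (simp add: algebra_simps)
    then have "aa * t * (p + 1) = 2 * (aa + 1) * t" by (simp only: e)
    then show ?thesis by (simp add: exp_powr_real)
  qed
  finally have xi1: "xi t powr (p + 1) = exp (2 * (aa + 1) * t) * U powr (p + 1)" .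
  have "(eta t)\<^sup>2 = exp (2 * (aa + 1) * t) * V\<^sup>2"
    by (simp add: eta_def V_def power_mult_distrib exp_double[symmetric] power2_eq_square exp_add[symmetric] algebra_simps)
  also have "\<dots> < exp (2 * (aa + 1) * t) * (q * U powr (p + 1))"
    using UV by simp
  finally show ?thesis using xi1 by (simp add: algebra_simps)
qed

lemma xi_deriv: "(xi has_real_derivative exp (aa * t) * (aa * u (exp t) + exp t * v (exp t))) (at t)"
proof -
  have d1: "((\<lambda>t. exp (aa * t)) has_real_derivative exp (aa * t) * aa) (at t)"
    using DERIV_chain2[OF DERIV_exp DERIV_cmult_Id[of aa t UNIV]] by simp
  have d2: "((\<lambda>t. u (exp t)) has_real_derivative v (exp t) * exp t) (at t)"
    using DERIV_chain2[OF du_at[of "exp t"] DERIV_exp] by simp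
  show ?thesis using DERIV_mult[OF d1 d2] unfolding xi_def[abs_def] by (simp add: algebra_simps)
qed

lemma xi_deriv_pos:
  assumes small: "xi t powr (p - 1) < aa\<^sup>2 / q"
  shows "exp (aa * t) * (aa * u (exp t) + exp t * v (exp t)) > 0"
proof -
  define U where "U = u (exp t)"
  define V where "V = v (exp t)"
  have U: "U > 0" and UV: "V\<^sup>2 < q * U powr (p + 1)" using region[of "exp t"] by (auto simp: U_def V_def)
  have q0: "q > 0" using q_bounds by simp
  have pne: "p - 1 \<noteq> 0" using p by simp
  have e: "aa * (p - 1) = 2" unfolding aa_def using pne by (simp add: field_simps)
  have "xi t powr (p - 1) = exp (aa * t) powr (p - 1) * U powr (p - 1)"
    by (simp add: xi_def U_def powr_mult)
  also have "exp (aa * t) powr (p - 1) = exp (2 * t)"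
  proof -
    have "aa * t * (p - 1) = (aa * (p - 1)) * t" by (simp add: algebra_simps)
    then have "aa * t * (p - 1) = 2 * t" by (simp only: e)
    then show ?thesis by (simp add: exp_powr_real)
  qed
  finally have xi1: "xi t powr (p - 1) = exp (2 * t) * U powr (p - 1)" .
  have Up: "U powr (p + 1) = U\<^sup>2 * U powr (p - 1)"
  proof -
    have "U powr (p + 1) = U powr (2 + (p - 1))" by (simp add: add.commute)
    also have "\<dots> = U powr 2 * U powr (p - 1)" by (rule powr_add)
    finally show ?thesis using U by simp
  qed
  have "(exp t * V)\<^sup>2 = exp (2 * t) * V\<^sup>2"
    by (simp add: power_mult_distrib exp_double[symmetric] power2_eq_square exp_add[symmetric])
  also have "\<dots> < exp (2 * t) * (q * U powr (p + 1))" using UV by simp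
  also have "\<dots> = q * U\<^sup>2 * xi t powr (p - 1)" using xi1 Up by (simp add: algebra_simps)
  also have "\<dots> \<le> q * U\<^sup>2 * (aa\<^sup>2 / q)"
    using small q0 U by (intro mult_left_mono) auto
  also have "\<dots> = (aa * U)\<^sup>2" using q0 by (simp add: power_mult_distrib)
  finally have "(- (exp t * V))\<^sup>2 < (aa * U)\<^sup>2" by simp
  moreover have "0 \<le> aa * U" using aa_pos U by simp
  ultimately have "- (exp t * V) < aa * U" by (rule power2_less_imp_less)
  then have "aa * U + exp t * V > 0" by simp
  then show ?thesis by (simp add: U_def V_def)
qed

lemma no00: "\<not> ((traj p u \<longlongrightarrow> (0, 0)) at_top)"
proof
  assume lim: "(traj p u \<longlongrightarrow> (0, 0)) at_top"
  have "((\<lambda>t. fst (traj p u t)) \<longlongrightarrow> fst (0::real, 0::real)) at_top" by (rule tendsto_fst[OF lim])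
  then have txi: "(xi \<longlongrightarrow> 0) at_top" by (simp add: traj_eq)
  define d where "d = (aa\<^sup>2 / q) powr (1 / (p - 1))"
  have q0: "q > 0" using q_bounds by simp
  have d0: "d > 0" using aa_pos q0 by (simp add: d_def)
  have dp: "d powr (p - 1) = aa\<^sup>2 / q"
    using p q0 by (simp add: d_def powr_powr)
  have "eventually (\<lambda>t. xi t < d) at_top" using order_tendstoD(2)[OF txi d0] .
  then obtain t0 where t0: "\<And>t. t \<ge> t0 \<Longrightarrow> xi t < d" unfolding eventually_at_top_linorder by blast
  have incr: "xi t0 \<le> xi t" if t: "t \<ge> t0" for t
  proof (rule DERIV_nonneg_imp_increasing_open[of t0 t xi])
    show "t0 \<le> t" by (rule t)
    show "continuous_on {t0..t} xi"
      by (rule continuous_at_imp_continuous_on) (use xi_deriv DERIV_isCont in blast)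
    fix x assume x: "t0 < x" "x < t"
    have "xi x powr (p - 1) < d powr (p - 1)"
      using t0[of x] x p xi_pos[of x] by (intro powr_less_mono2) auto
    then have "exp (aa * x) * (aa * u (exp x) + exp x * v (exp x)) > 0"
      using dp by (intro xi_deriv_pos) simp
    then show "\<exists>y. (xi has_real_derivative y) (at x) \<and> 0 \<le> y" using xi_deriv[of x] by (auto intro: less_imp_le)
  qed
  have "xi t0 \<le> 0"
    by (rule tendsto_lowerbound[OF txi]) (use incr in \<open>auto simp: eventually_at_top_linorder\<close>)
  then show False using xi_pos[of t0] by simp
qed

lemma noP1:
  assumes X: "0 < X1" "X1 < X2" "{X. X > 0 \<and> PhiM N p M X = 0} = {X1, X2}"
  shows "\<not> ((traj p u \<longlongrightarrow> (X1, 2 / (p - 1) * X1)) at_top)"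
proof
  assume lim: "(traj p u \<longlongrightarrow> (X1, 2 / (p - 1) * X1)) at_top"
  have "((\<lambda>t. fst (traj p u t)) \<longlongrightarrow> fst (X1, 2 / (p - 1) * X1)) at_top" by (rule tendsto_fst[OF lim])
  then have txi: "(xi \<longlongrightarrow> X1) at_top" by (simp add: traj_eq)
  have "((\<lambda>t. snd (traj p u t)) \<longlongrightarrow> snd (X1, 2 / (p - 1) * X1)) at_top" by (rule tendsto_snd[OF lim])
  then have teta: "(eta \<longlongrightarrow> 2 / (p - 1) * X1) at_top" by (simp add: traj_eq)
  have "((\<lambda>t. q * xi t powr (p + 1) - (eta t)\<^sup>2) \<longlongrightarrow> q * X1 powr (p + 1) - (2 / (p - 1) * X1)\<^sup>2) at_top"
    using X(1) by (intro tendsto_intros txi teta) auto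
  then have "0 \<le> q * X1 powr (p + 1) - (2 / (p - 1) * X1)\<^sup>2"
    by (rule tendsto_lowerbound) (use rel in \<open>auto intro!: always_eventually less_imp_le\<close>)
  then have T: "(2 / (p - 1) * X1)\<^sup>2 \<le> qq p * X1 powr (p + 1)" by (simp add: q_def)
  have "X1 \<in> {X. X > 0 \<and> PhiM N p M X = 0}" "X2 \<in> {X. X > 0 \<and> PhiM N p M X = 0}"
    using X(3) by auto
  then have "PhiM N p M X1 = 0" "PhiM N p M X2 = 0" by auto
  then show False using roots_contra[OF p N Mc M1 X(1,2) _ _ T] by auto
qed

end

theorem lemma4p4:
  fixes N :: nat and p M :: real
  assumes "p > 1"
    and "(N \<ge> 2 \<and> M \<le> - mu_star1 p) \<or> (N = 1 \<and> M < - mu_star1 p)"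
  shows "\<exists>u. ground_state N p M u
          \<and> (\<forall>r>0. (deriv u r)\<^sup>2 < 2 * p / (p + 1) * u r powr (p + 1))
          \<and> \<not> ((traj p u \<longlongrightarrow> (0, 0)) at_top)
          \<and> (((N \<ge> 3 \<and> p < real N / (real N - 2)) \<or> N \<in> {1, 2}) \<longrightarrow>
               (\<forall>X1 X2. 0 < X1 \<and> X1 < X2 \<and> {X. X > 0 \<and> PhiM N p M X = 0} = {X1, X2} \<longrightarrow>
                  \<not> ((traj p u \<longlongrightarrow> (X1, 2 / (p - 1) * X1)) at_top)))"
proof -
  have p: "p > 1" by fact
  have N: "N \<ge> 1" using assms(2) by auto
  have Mc: "M \<le> - mu_star1 p" using assms(2) by auto
  have M1: "N = 1 \<Longrightarrow> M < - mu_star1 p" using assms(2) by auto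
  obtain u v where
    cu: "continuous_on {0..} u" and cv: "continuous_on {0..} v" and u0: "u 0 = 1" and v0: "v 0 = 0"
    and ui: "\<forall>r\<ge>0. u r = 1 + integral {0..r} v"
    and du: "\<forall>r\<ge>0. (u has_real_derivative v r) (at r within {0..})"
    and dv: "\<forall>r>0. (v has_real_derivative (- Ft p M (u r) (v r) - real (N - 1) / r * v r)) (at r)"
    and dv0: "(v has_real_derivative - Ft p M 1 0 / N) (at 0 within {0..})"
    using sol_exists[of p N M] p N by auto
  interpret sol p M N u v
    by unfold_locales (use p N Mc M1 cu cv u0 v0 ui du dv dv0 in auto)
  show ?thesis
    by (rule exI[of _ u]) (use gs ineq no00 noP1 in blast)
qed

end
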